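(* Let $X$ be a nontrivial real Hausdorff locally convex space, $f\in\Gamma(X)$, $x^{\ast}\in X^{\ast}$, and $L:=\{u\in X: f_\infty(u)=\langle u,x^{\ast}\rangle,\ f_\infty(-u)=-\langle u,x^{\ast}\rangle\}$ (a closed linear subspace). Let $X/L$ carry the quotient topology, $\pi(x)=\widehat{x}$ the natural projection, and define $h:X/L\to\mathbb{R}\cup\{\pm\infty\}$ by $h(\widehat{x}):=f(x)-\langle x,x^{\ast}\rangle$ (this is well defined, and $f=h\circ\pi+x^{\ast}$). Then: (a) $h\in\Gamma(X/L)$, $h_\infty(\widehat{u})=f_\infty(u)-\langle u,x^{\ast}\rangle$ for all $u\in X$, and $\{\widehat{u}\in X/L: h_\infty(\widehat{u})=h_\infty(-\widehat{u})=0\}=\{\widehat{0}\}$; (b) $h_\infty\ge0$ if and only if $x^{\ast}\in\overline{\operatorname{dom}f^{\ast}}$; (c) if $x^{\ast}\in\overline{\operatorname{dom}f^{\ast}}$ (in which case $L=L_f$), then $[h_\infty\le0]=\{\widehat{0}\}\iff x^{\ast}\in\operatorname{qri}\overline{\operatorname{dom}f^{\ast}}\iff L=[f_\infty\le x^{\ast}]\iff L=[f_\infty=x^{\ast}]$; (d) $\inf h=-f^{\ast}(x^{\ast})$, and so $h$ is bounded from below if and only if $x^{\ast}\in\operatorname{dom}f^{\ast}$; (e) $h$ attains its infimum on $X/L$ if and only if $x^{\ast}\in\operatorname{Im}\partial f$.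
   Context: $X^{\ast}$ is the dual of $X$ with the weak$^{\ast}$ topology (closures in $X^{\ast}$ are weak$^{\ast}$ closures), $\langle x,x^{\ast}\rangle=x^{\ast}(x)$. $\Gamma(V)$: proper lower semicontinuous convex functions on $V$. For $\varphi\in\Gamma(V)$: $\operatorname{dom}\varphi$, conjugate $\varphi^{\ast}(v^{\ast})=\sup_v(\langle v,v^{\ast}\rangle-\varphi(v))$, subdifferential $\partial\varphi(v)=\{v^{\ast}:\langle v'-v,v^{\ast}\rangle\le\varphi(v')-\varphi(v)\ \forall v'\}$ if $\varphi(v)\in\mathbb{R}$ (empty otherwise), $\operatorname{Im}\partial\varphi=\bigcup_v\partial\varphi(v)$, recession function $\varphi_\infty(u)=\lim_{t\to\infty}(\varphi(v_0+tu)-\varphi(v_0))/t$ for any $v_0\in\operatorname{dom}\varphi$. $L_f:=\{u: f_\infty(u)=\langle u,y^{\ast}\rangle,\ f_\infty(-u)=-\langle u,y^{\ast}\rangle\}$ for any $y^{\ast}\in\overline{\operatorname{dom}f^{\ast}}$ (independent of the choice). $[f_\infty\le x^{\ast}]=\{u:f_\infty(u)\le\langle u,x^{\ast}\rangle\}$, $[f_\infty=x^{\ast}]$ similarly. For convex $B\subset X^{\ast}$, $\operatorname{qri}B=\{b\in B:\overline{\mathbb{R}_+(B-b)}\text{ is a linear subspace}\}$. *)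

theory Defs
  imports "HOL-Analysis.Analysis"
begin

definition tvs :: "'a::{real_vector,topological_space} itself \<Rightarrow> bool" where
  "tvs _ \<longleftrightarrow> continuous_on UNIV (\<lambda>(x::'a, y::'a). x + y) \<and>
              continuous_on UNIV (\<lambda>(t::real, x::'a). t *\<^sub>R x)"

definition locally_convex :: "'a::{real_vector,topological_space} itself \<Rightarrow> bool" where
  "locally_convex _ \<longleftrightarrow> (\<forall>U::'a set. open U \<and> 0 \<in> U \<longrightarrow>
       (\<exists>V. open V \<and> convex V \<and> 0 \<in> V \<and> V \<subseteq> U))"

definition dual :: "('a::{real_vector,topological_space} \<Rightarrow> real) set" where
  "dual = {g. linear g \<and> continuous_on UNIV g}"

text \<open>Weak-star topology: the topology of pointwise convergence on X*, i.e. the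
  subspace topology of the product topology on functions X \<Rightarrow> real.\<close>
definition weakstar :: "('a::{real_vector,topological_space} \<Rightarrow> real) topology" where
  "weakstar = subtopology (product_topology (\<lambda>_. euclideanreal) UNIV) dual"

definition fsubspace :: "('a \<Rightarrow> real) set \<Rightarrow> bool" where
  "fsubspace S \<longleftrightarrow> (\<lambda>_. 0) \<in> S \<and> (\<forall>a\<in>S. \<forall>b\<in>S. (\<lambda>x. a x + b x) \<in> S)
      \<and> (\<forall>c. \<forall>a\<in>S. (\<lambda>x. c * a x) \<in> S)"

definition qri :: "('a::{real_vector,topological_space} \<Rightarrow> real) set \<Rightarrow> ('a \<Rightarrow> real) set" where
  "qri B = {b\<in>B. fsubspace (weakstar closure_of
              {(\<lambda>x. t * (c x - b x)) | t c. t \<ge> 0 \<and> c \<in> B})}"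

definition efdom :: "('v \<Rightarrow> ereal) \<Rightarrow> 'v set" where
  "efdom \<phi> = {v. \<phi> v < \<infinity>}"

definition GammaF :: "'v topology \<Rightarrow> ('v \<Rightarrow> 'v \<Rightarrow> 'v) \<Rightarrow> (real \<Rightarrow> 'v \<Rightarrow> 'v) \<Rightarrow> 'v set
                      \<Rightarrow> ('v \<Rightarrow> ereal) \<Rightarrow> bool" where
  "GammaF T add sc C \<phi> \<longleftrightarrow>
     (\<forall>x\<in>C. \<phi> x \<noteq> -\<infinity>) \<and> (\<exists>x\<in>C. \<phi> x \<noteq> \<infinity>) \<and>
     (\<forall>x\<in>C. \<forall>y\<in>C. \<forall>t. 0 < t \<and> t < 1 \<longrightarrow>
         \<phi> (add (sc t x) (sc (1 - t) y)) \<le> ereal t * \<phi> x + ereal (1 - t) * \<phi> y) \<and>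
     (\<forall>a::real. closedin T {x\<in>C. \<phi> x \<le> ereal a})"

definition recc :: "('v \<Rightarrow> 'v \<Rightarrow> 'v) \<Rightarrow> (real \<Rightarrow> 'v \<Rightarrow> 'v) \<Rightarrow> 'v set \<Rightarrow> ('v \<Rightarrow> ereal)
                    \<Rightarrow> 'v \<Rightarrow> ereal" where
  "recc add sc C \<phi> u =
     (let v0 = (SOME v. v \<in> C \<and> \<bar>\<phi> v\<bar> \<noteq> \<infinity>) in
       Lim at_top (\<lambda>t::real. (\<phi> (add v0 (sc t u)) - \<phi> v0) / ereal t))"

abbreviation Gamma :: "('a::{real_vector,topological_space} \<Rightarrow> ereal) \<Rightarrow> bool" where
  "Gamma f \<equiv> GammaF euclidean (+) (*\<^sub>R) UNIV f"

abbreviation rec :: "('a::{real_vector,topological_space} \<Rightarrow> ereal) \<Rightarrow> 'a \<Rightarrow> ereal" where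
  "rec f \<equiv> recc (+) (*\<^sub>R) UNIV f"

definition conj :: "('a::{real_vector,topological_space} \<Rightarrow> ereal) \<Rightarrow> ('a \<Rightarrow> real) \<Rightarrow> ereal" where
  "conj f y = (SUP v. ereal (y v) - f v)"

definition domconj :: "('a::{real_vector,topological_space} \<Rightarrow> ereal) \<Rightarrow> ('a \<Rightarrow> real) set" where
  "domconj f = {y\<in>dual. conj f y < \<infinity>}"

definition subdiff :: "('a::{real_vector,topological_space} \<Rightarrow> ereal) \<Rightarrow> 'a \<Rightarrow> ('a \<Rightarrow> real) set" where
  "subdiff f v = (if \<bar>f v\<bar> \<noteq> \<infinity> then
       {y\<in>dual. \<forall>v'. ereal (y (v' - v)) \<le> f v' - f v} else {})"

definition Im_subdiff :: "('a::{real_vector,topological_space} \<Rightarrow> ereal) \<Rightarrow> ('a \<Rightarrow> real) set" where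
  "Im_subdiff f = (\<Union>v. subdiff f v)"

text \<open>\<open>L_f\<close>, using an (arbitrary) element of the weak-star closure of dom f*.\<close>
definition Lf :: "('a::{real_vector,topological_space} \<Rightarrow> ereal) \<Rightarrow> 'a set" where
  "Lf f = (let y = (SOME y. y \<in> weakstar closure_of domconj f) in
     {u. rec f u = ereal (y u) \<and> rec f (- u) = ereal (- y u)})"

definition proj :: "'a::real_vector set \<Rightarrow> 'a \<Rightarrow> 'a set" where
  "proj L x = (\<lambda>l. x + l) ` L"

definition cosets :: "'a::real_vector set \<Rightarrow> 'a set set" where
  "cosets L = range (proj L)"

definition rep :: "'a set \<Rightarrow> 'a" where
  "rep A = (SOME x. x \<in> A)"

definition qadd :: "'a::real_vector set \<Rightarrow> 'a set \<Rightarrow> 'a set \<Rightarrow> 'a set" where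
  "qadd L A B = proj L (rep A + rep B)"

definition qscale :: "'a::real_vector set \<Rightarrow> real \<Rightarrow> 'a set \<Rightarrow> 'a set" where
  "qscale L t A = proj L (t *\<^sub>R rep A)"

definition qtop :: "'a::{real_vector,topological_space} set \<Rightarrow> 'a set topology" where
  "qtop L = topology (\<lambda>U. U \<subseteq> cosets L \<and> open (proj L -` U))"

lemma istopology_qtop: "istopology (\<lambda>U. U \<subseteq> cosets L \<and> open (proj L -` (U::'a::{real_vector,topological_space} set set)))"
  unfolding istopology_def
  by (auto simp: vimage_Int vimage_Union intro!: open_Int open_UN)

lemma openin_qtop: "openin (qtop L) U \<longleftrightarrow> U \<subseteq> cosets L \<and> open (proj L -` U)"
  unfolding qtop_def using istopology_qtop topology_inverse' by metis

definition hq :: "('a::real_vector \<Rightarrow> ereal) \<Rightarrow> ('a \<Rightarrow> real) \<Rightarrow> 'a set \<Rightarrow> 'a set \<Rightarrow> ereal" where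
  "hq f xs L A = f (rep A) - ereal (xs (rep A))"

end

theory Submission
  imports Defs "HOL-Library.Function_Algebras"
begin

definition sublin :: "('b::real_vector \<Rightarrow> real) \<Rightarrow> bool" where
  "sublin p \<longleftrightarrow> (\<forall>x y. p (x + y) \<le> p x + p y) \<and> (\<forall>t x. t \<ge> 0 \<longrightarrow> p (t *\<^sub>R x) = t * p x)"

definition hbok :: "('b::real_vector \<Rightarrow> real) \<Rightarrow> 'b \<Rightarrow> ('b \<times> real) set \<Rightarrow> bool" where
  "hbok p x0 G \<longleftrightarrow> (\<forall>x r r'. (x,r)\<in>G \<longrightarrow> (x,r')\<in>G \<longrightarrow> r = r') \<and> (x0, p x0) \<in> G
     \<and> (\<forall>x r y s. (x,r)\<in>G \<longrightarrow> (y,s)\<in>G \<longrightarrow> (x+y, r+s) \<in> G)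
     \<and> (\<forall>x r c. (x,r)\<in>G \<longrightarrow> (c *\<^sub>R x, c*r) \<in> G)
     \<and> (\<forall>x r. (x,r)\<in>G \<longrightarrow> r \<le> p x)"

lemma sublin_0: assumes "sublin p" shows "p 0 = 0"
proof -
  have "p ((0::real) *\<^sub>R 0) = 0 * p 0" using assms unfolding sublin_def by blast
  thus ?thesis by simp
qed

lemma sublin_neg: assumes "sublin p" shows "- p (-x) \<le> p x"
proof -
  have "p (x + -x) \<le> p x + p (-x)" using assms unfolding sublin_def by blast
  thus ?thesis using sublin_0[OF assms] by simp
qed

lemma sublin_scale_le: assumes "sublin p" shows "c * p x \<le> p (c *\<^sub>R x)"
proof (cases "c \<ge> 0")
  case True thus ?thesis using assms unfolding sublin_def by simp
next
  case False
  have h: "\<forall>t x. t \<ge> 0 \<longrightarrow> p (t *\<^sub>R x) = t * p x" using assms unfolding sublin_def by blast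
  have e: "p (c *\<^sub>R x) = (-c) * p (-x)" using h[rule_format, of "-c" "-x"] False by simp
  have "c * p x \<le> (-c) * p (-x)"
  proof -
    have "- p (-x) \<le> p x" using sublin_neg[OF assms, of x] .
    hence "c * p x \<le> c * (- p (-x))" using False mult_left_mono_neg[of "- p (-x)" "p x" c] by simp
    thus ?thesis by simp
  qed
  thus ?thesis using e by simp
qed

lemma mem_base: "(x,r) \<in> {(c *\<^sub>R x0, c * p x0) | c. True} \<longleftrightarrow> (\<exists>c. x = c *\<^sub>R x0 \<and> r = c * p x0)"
  by auto

lemma hbok_base: assumes "sublin p"
  shows "hbok p x0 {(c *\<^sub>R x0, c * p x0) | c. True}"
  unfolding hbok_def
proof (intro conjI allI impI)
  fix x r r' assume "(x, r) \<in> {(c *\<^sub>R x0, c * p x0) |c. True}" "(x, r') \<in> {(c *\<^sub>R x0, c * p x0) |c. True}"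
  then obtain c c' where e: "x = c *\<^sub>R x0" "r = c * p x0" "x = c' *\<^sub>R x0" "r' = c' * p x0" unfolding mem_base by blast
  show "r = r'"
  proof (cases "x0 = 0")
    case True thus ?thesis using e sublin_0[OF assms] by simp
  next
    case False then have "c = c'" using e by (metis scaleR_cancel_right)
    thus ?thesis using e by simp
  qed
next
  show "(x0, p x0) \<in> {(c *\<^sub>R x0, c * p x0) |c. True}" unfolding mem_base by (rule exI[of _ 1]) simp
next
  fix x r y s assume "(x, r) \<in> {(c *\<^sub>R x0, c * p x0) |c. True}" "(y, s) \<in> {(c *\<^sub>R x0, c * p x0) |c. True}"
  then obtain c c' where e: "x = c *\<^sub>R x0" "r = c * p x0" "y = c' *\<^sub>R x0" "s = c' * p x0" unfolding mem_base by blast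
  show "(x + y, r + s) \<in> {(c *\<^sub>R x0, c * p x0) |c. True}"
    unfolding mem_base by (rule exI[of _ "c + c'"]) (simp add: e algebra_simps)
next
  fix x r c assume "(x, r) \<in> {(c *\<^sub>R x0, c * p x0) |c. True}"
  then obtain c' where e: "x = c' *\<^sub>R x0" "r = c' * p x0" unfolding mem_base by blast
  show "(c *\<^sub>R x, c * r) \<in> {(c *\<^sub>R x0, c * p x0) |c. True}"
    unfolding mem_base by (rule exI[of _ "c * c'"]) (simp add: e algebra_simps)
next
  fix x r assume "(x, r) \<in> {(c *\<^sub>R x0, c * p x0) |c. True}"
  then obtain c' where e: "x = c' *\<^sub>R x0" "r = c' * p x0" unfolding mem_base by blast
  show "r \<le> p x" using sublin_scale_le[OF assms] e by simp
qed

lemma hbok_chain: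
  assumes "sublin p" "C \<in> chains {G. hbok p x0 G}"
  shows "\<exists>U\<in>{G. hbok p x0 G}. \<forall>X\<in>C. X \<subseteq> U"
proof (cases "C = {}")
  case True thus ?thesis using hbok_base[OF assms(1)] by blast
next
  case False
  have sub: "\<And>G. G \<in> C \<Longrightarrow> hbok p x0 G" and ch: "\<And>A B. A \<in> C \<Longrightarrow> B \<in> C \<Longrightarrow> A \<subseteq> B \<or> B \<subseteq> A"
    using assms(2) unfolding chains_def chain_subset_def by auto
  have two: "\<exists>G\<in>C. a \<in> G \<and> b \<in> G" if ab: "a \<in> \<Union>C" "b \<in> \<Union>C" for a b
  proof -
    obtain A B where "A \<in> C" "B \<in> C" "a \<in> A" "b \<in> B" using ab by blast
    thus ?thesis using ch[of A B] by blast
  qed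
  have "hbok p x0 (\<Union>C)"
    unfolding hbok_def
  proof (intro conjI allI impI)
    fix x r r' assume "(x, r) \<in> \<Union> C" "(x, r') \<in> \<Union> C"
    then obtain G where "G \<in> C" "(x,r) \<in> G" "(x,r') \<in> G" using two by blast
    thus "r = r'" using sub unfolding hbok_def by blast
  next
    obtain G where "G \<in> C" using False by auto
    thus "(x0, p x0) \<in> \<Union> C" using sub unfolding hbok_def by blast
  next
    fix x r y s assume "(x, r) \<in> \<Union> C" "(y, s) \<in> \<Union> C"
    then obtain G where "G \<in> C" "(x,r) \<in> G" "(y,s) \<in> G" using two by blast
    thus "(x + y, r + s) \<in> \<Union> C" using sub unfolding hbok_def by blast
  next
    fix x r c assume "(x, r) \<in> \<Union> C"
    thus "(c *\<^sub>R x, c * r) \<in> \<Union> C" using sub unfolding hbok_def by blast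
  next
    fix x r assume "(x, r) \<in> \<Union> C"
    thus "r \<le> p x" using sub unfolding hbok_def by blast
  qed
  thus ?thesis by blast
qed

lemma hbok_extend:
  assumes p: "sublin p" and M: "hbok p x0 M" and z: "z \<notin> fst ` M"
  shows "\<exists>M'. hbok p x0 M' \<and> M \<subseteq> M' \<and> M' \<noteq> M"
proof -
  have fnl: "\<And>x r r'. (x,r)\<in>M \<Longrightarrow> (x,r')\<in>M \<Longrightarrow> r = r'"
    and base: "(x0, p x0) \<in> M"
    and add: "\<And>x r y s. (x,r)\<in>M \<Longrightarrow> (y,s)\<in>M \<Longrightarrow> (x+y, r+s) \<in> M"
    and sc: "\<And>x r c. (x,r)\<in>M \<Longrightarrow> (c *\<^sub>R x, c*r) \<in> M"
    and dom: "\<And>x r. (x,r)\<in>M \<Longrightarrow> r \<le> p x" using M unfolding hbok_def by blast+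
  have zero: "(0, 0) \<in> M" using sc[OF base, of 0] by simp
  have padd: "\<And>x y. p (x + y) \<le> p x + p y" and phom: "\<And>t x. t \<ge> 0 \<Longrightarrow> p (t *\<^sub>R x) = t * p x"
    using p unfolding sublin_def by blast+
  define c where "c = Sup {r - p (x - z) | x r. (x,r) \<in> M}"
  have key: "r - p (x - z) \<le> p (y + z) - s" if "(x,r)\<in>M" "(y,s)\<in>M" for x r y s
  proof -
    have "r + s \<le> p (x + y)" using dom[OF add[OF that]] .
    also have "\<dots> \<le> p (x - z) + p (y + z)" using padd[of "x - z" "y + z"] by simp
    finally show ?thesis by simp
  qed
  have ne: "{r - p (x - z) | x r. (x,r) \<in> M} \<noteq> {}" using zero by blast
  have bdd: "bdd_above {r - p (x - z) | x r. (x,r) \<in> M}"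
    unfolding bdd_above_def using key[OF _ zero] by force
  have c1: "r - p (x - z) \<le> c" if "(x,r)\<in>M" for x r
    unfolding c_def by (rule cSup_upper[OF _ bdd]) (use that in blast)
  have c2: "c \<le> p (y + z) - s" if "(y,s)\<in>M" for y s
    unfolding c_def by (rule cSup_least[OF ne]) (use key that in blast)
  define M' where "M' = {(x + a *\<^sub>R z, r + a * c) | x r a. (x,r) \<in> M}"
  have inM': "(x + a *\<^sub>R z, r + a * c) \<in> M'" if "(x,r) \<in> M" for x r a
    unfolding M'_def using that by blast
  have memM': "\<exists>x1 r1 a. x = x1 + a *\<^sub>R z \<and> r = r1 + a * c \<and> (x1,r1)\<in>M" if "(x,r) \<in> M'" for x r
    using that unfolding M'_def by auto
  have subM: "M \<subseteq> M'"
  proof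
    fix q assume "q \<in> M" then obtain x r where "q = (x,r)" "(x,r) \<in> M" by (cases q) auto
    thus "q \<in> M'" using inM'[of x r 0] by simp
  qed
  have domsub: "\<And>x r y s. (x,r)\<in>M \<Longrightarrow> (y,s)\<in>M \<Longrightarrow> (x - y, r - s) \<in> M"
  proof -
    fix x r y s assume "(x,r)\<in>M" "(y,s)\<in>M"
    have "((-1) *\<^sub>R y, (-1) * s) \<in> M" using sc \<open>(y,s)\<in>M\<close> by blast
    hence "(x + (-1) *\<^sub>R y, r + (-1) * s) \<in> M" using add \<open>(x,r)\<in>M\<close> by blast
    thus "(x - y, r - s) \<in> M" by simp
  qed
  have "hbok p x0 M'"
    unfolding hbok_def
  proof (intro conjI allI impI)
    fix x r r' assume a: "(x, r) \<in> M'" "(x, r') \<in> M'"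
    obtain x1 r1 a1 where e1: "x = x1 + a1 *\<^sub>R z" "r = r1 + a1 * c" "(x1,r1)\<in>M" using memM'[OF a(1)] by blast
    obtain x2 r2 a2 where e2: "x = x2 + a2 *\<^sub>R z" "r' = r2 + a2 * c" "(x2,r2) \<in> M" using memM'[OF a(2)] by blast
    note e = e1 e2
    have "a1 = a2"
    proof (rule ccontr)
      assume ne: "a1 \<noteq> a2"
      have "(x2 - x1, r2 - r1) \<in> M" using domsub e by blast
      hence "(inverse (a1 - a2) *\<^sub>R (x2 - x1), inverse (a1 - a2) * (r2 - r1)) \<in> M" using sc by blast
      moreover have "inverse (a1 - a2) *\<^sub>R (x2 - x1) = z"
      proof -
        have "x2 - x1 = (a1 - a2) *\<^sub>R z" using e by (simp add: algebra_simps)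
        thus ?thesis using ne by simp
      qed
      ultimately show False using z by force
    qed
    moreover then have "x1 = x2" using e by simp
    ultimately show "r = r'" using e fnl by blast
  next
    show "(x0, p x0) \<in> M'" using subM base by blast
  next
    fix x r y s assume a: "(x, r) \<in> M'" "(y, s) \<in> M'"
    obtain x1 r1 a1 where e1: "x = x1 + a1 *\<^sub>R z" "r = r1 + a1 * c" "(x1,r1)\<in>M" using memM'[OF a(1)] by blast
    obtain x2 r2 a2 where e2: "y = x2 + a2 *\<^sub>R z" "s = r2 + a2 * c" "(x2,r2) \<in> M" using memM'[OF a(2)] by blast
    note e = e1 e2
    have "(x1 + x2 + (a1 + a2) *\<^sub>R z, r1 + r2 + (a1 + a2) * c) \<in> M'"
      using inM' add[OF e(3) e(6)] by blast
    thus "(x + y, r + s) \<in> M'" using e by (simp add: algebra_simps)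
  next
    fix x r b assume "(x, r) \<in> M'"
    then obtain x1 r1 a1 where e: "x = x1 + a1 *\<^sub>R z" "r = r1 + a1 * c" "(x1,r1)\<in>M"
      using memM' by blast
    have "(b *\<^sub>R x1 + (b * a1) *\<^sub>R z, b * r1 + (b * a1) * c) \<in> M'"
      using inM' sc[OF e(3)] by blast
    thus "(b *\<^sub>R x, b * r) \<in> M'" using e by (simp add: algebra_simps)
  next
    fix x r assume "(x, r) \<in> M'"
    then obtain x1 r1 a where e: "x = x1 + a *\<^sub>R z" "r = r1 + a * c" "(x1,r1)\<in>M"
      using memM' by blast
    show "r \<le> p x"
    proof (cases a "0::real" rule: linorder_cases)
      case equal thus ?thesis using e dom by simp
    next
      case greater
      have m: "(inverse a *\<^sub>R x1, inverse a * r1) \<in> M" using sc[OF e(3)] .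
      have "inverse a * r1 + c \<le> p (inverse a *\<^sub>R x1 + z)" using c2[OF m] by simp
      hence "a * (inverse a * r1 + c) \<le> a * p (inverse a *\<^sub>R x1 + z)"
        using greater by (simp add: mult_left_mono)
      also have "a * p (inverse a *\<^sub>R x1 + z) = p (a *\<^sub>R (inverse a *\<^sub>R x1 + z))"
        using phom[of a] greater by simp
      also have "a *\<^sub>R (inverse a *\<^sub>R x1 + z) = x" using e greater by (simp add: algebra_simps)
      finally have "a * (inverse a * r1 + c) \<le> p x" .
      moreover have "a * (inverse a * r1 + c) = r" using e greater by (simp add: field_simps)
      ultimately show ?thesis by simp
    next
      case less
      define b where "b = - a"
      have bpos: "b > 0" using less b_def by simp
      have m: "(inverse b *\<^sub>R x1, inverse b * r1) \<in> M" using sc[OF e(3)] .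
      have "inverse b * r1 - c \<le> p (inverse b *\<^sub>R x1 - z)" using c1[OF m] by simp
      hence "b * (inverse b * r1 - c) \<le> b * p (inverse b *\<^sub>R x1 - z)"
        using bpos by (simp add: mult_left_mono)
      also have "b * p (inverse b *\<^sub>R x1 - z) = p (b *\<^sub>R (inverse b *\<^sub>R x1 - z))"
        using phom[of b] bpos by simp
      also have "b *\<^sub>R (inverse b *\<^sub>R x1 - z) = x" using e bpos b_def by (simp add: algebra_simps)
      finally have "b * (inverse b * r1 - c) \<le> p x" .
      moreover have "b * (inverse b * r1 - c) = r" using e bpos b_def by (simp add: field_simps)
      ultimately show ?thesis by simp
    qed
  qed
  moreover have "M' \<noteq> M"
  proof
    assume "M' = M"
    hence "(0 + 1 *\<^sub>R z, 0 + 1 * c) \<in> M" using inM'[OF zero] by metis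
    thus False using z by force
  qed
  ultimately show ?thesis using subM by blast
qed

theorem hahn_banach:
  assumes p: "sublin p"
  shows "\<exists>\<phi>. linear \<phi> \<and> (\<forall>x. \<phi> x \<le> p x) \<and> \<phi> x0 = p x0"
proof -
  obtain M where M: "hbok p x0 M" and max: "\<forall>X\<in>{G. hbok p x0 G}. M \<subseteq> X \<longrightarrow> X = M"
    using Zorn_Lemma2[of "{G. hbok p x0 G}"] hbok_chain[OF p] by blast
  have full: "x \<in> fst ` M" for x
    using hbok_extend[OF p M, of x] max by blast
  have fnl: "\<And>x r r'. (x,r)\<in>M \<Longrightarrow> (x,r')\<in>M \<Longrightarrow> r = r'"
    and base: "(x0, p x0) \<in> M"
    and add: "\<And>x r y s. (x,r)\<in>M \<Longrightarrow> (y,s)\<in>M \<Longrightarrow> (x+y, r+s) \<in> M"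
    and sc: "\<And>x r c. (x,r)\<in>M \<Longrightarrow> (c *\<^sub>R x, c*r) \<in> M"
    and dom: "\<And>x r. (x,r)\<in>M \<Longrightarrow> r \<le> p x" using M unfolding hbok_def by blast+
  define \<phi> where "\<phi> x = (THE r. (x, r) \<in> M)" for x
  have phi: "(x, \<phi> x) \<in> M" for x
  proof -
    obtain r where "(x, r) \<in> M" using full[of x] by force
    hence "\<phi> x = r" unfolding \<phi>_def using fnl by blast
    thus ?thesis using \<open>(x,r) \<in> M\<close> by simp
  qed
  have phieq: "(x, r) \<in> M \<Longrightarrow> \<phi> x = r" for x r using fnl phi by blast
  have "linear \<phi>"
    by (rule linearI) (use phieq add sc phi in auto)
  moreover have "\<forall>x. \<phi> x \<le> p x" using dom phi by blast
  moreover have "\<phi> x0 = p x0" using phieq base by blast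
  ultimately show ?thesis by blast
qed


theorem sep_gauge:
  fixes C :: "'b::real_vector set"
  assumes cv: "convex C" and z: "0 \<in> C" and ab: "\<And>x. \<exists>t>0. t *\<^sub>R x \<in> C" and z0: "z0 \<notin> C"
  shows "\<exists>\<phi>::'b \<Rightarrow> real. linear \<phi> \<and> \<phi> z0 \<ge> 1 \<and> (\<forall>c\<in>C. \<phi> c \<le> 1)"
proof -
  define S where "S x = {r. r > 0 \<and> inverse r *\<^sub>R x \<in> C}" for x
  define g where "g x = Inf (S x)" for x
  have Sne: "S x \<noteq> {}" for x
  proof -
    obtain t where "t > 0" "t *\<^sub>R x \<in> C" using ab by blast
    hence "inverse t \<in> S x" unfolding S_def by simp
    thus ?thesis by blast
  qed
  have bdd: "bdd_below (S x)" for x unfolding S_def bdd_below_def by (rule exI[of _ 0]) auto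
  have g0: "0 \<le> g x" for x unfolding g_def by (rule cInf_greatest[OF Sne]) (auto simp: S_def)
  have low: "g x \<le> r" if "r > 0" "inverse r *\<^sub>R x \<in> C" for x r
    unfolding g_def by (rule cInf_lower[OF _ bdd]) (use that in \<open>auto simp: S_def\<close>)
  have mem: "inverse r *\<^sub>R x \<in> C" if rg: "r > g x" for x r
  proof -
    obtain r' where r': "r' \<in> S x" "r' < r" using cInf_lessD[OF Sne, of x r] rg unfolding g_def by blast
    hence rp: "r' > 0" "inverse r' *\<^sub>R x \<in> C" unfolding S_def by auto
    have "(r'/r) *\<^sub>R (inverse r' *\<^sub>R x) + (1 - r'/r) *\<^sub>R 0 \<in> C"
      by (rule convexD[OF cv rp(2) z]) (use rp r' in auto)
    hence m: "(r'/r) *\<^sub>R (inverse r' *\<^sub>R x) \<in> C" by simp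
    have "(r'/r) *\<^sub>R (inverse r' *\<^sub>R x) = inverse r *\<^sub>R x" using rp by (simp add: field_simps)
    with m show ?thesis by metis
  qed
  have hom_le: "g (t *\<^sub>R x) \<le> t * g x" if "t > 0" for t x
  proof (rule field_le_epsilon)
    fix e :: real assume e: "e > 0"
    define r where "r = g x + e / t"
    have "e / t > 0" using e that by simp
    hence rp: "r > 0" "r > g x" using g0[of x] by (auto simp: r_def)
    have "inverse r *\<^sub>R x \<in> C" using mem rp by blast
    moreover have "inverse (t * r) *\<^sub>R (t *\<^sub>R x) = inverse r *\<^sub>R x" using that by simp
    ultimately have "inverse (t * r) *\<^sub>R (t *\<^sub>R x) \<in> C" by metis
    hence "g (t *\<^sub>R x) \<le> t * r" using low[of "t * r" "t *\<^sub>R x"] rp that by simp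
    also have "t * r = t * g x + e" using that by (simp add: r_def field_simps)
    finally show "g (t *\<^sub>R x) \<le> t * g x + e" .
  qed
  have gzero: "g 0 = 0"
  proof -
    have le: "g 0 \<le> e" if ep: "e > 0" for e
    proof -
      have "inverse e *\<^sub>R (0::'b) \<in> C" using z by simp
      thus ?thesis using low[of e 0] ep by blast
    qed
    have "g 0 \<le> 0"
    proof (rule field_le_epsilon)
      fix e :: real assume "0 < e" thus "g 0 \<le> 0 + e" using le by simp
    qed
    thus ?thesis using g0[of 0] by simp
  qed
  have hom: "g (t *\<^sub>R x) = t * g x" if "t \<ge> 0" for t x
  proof (cases "t = 0")
    case True thus ?thesis using gzero by simp
  next
    case False
    hence tp: "t > 0" using that by simp
    have "g (inverse t *\<^sub>R (t *\<^sub>R x)) \<le> inverse t * g (t *\<^sub>R x)" using hom_le[of "inverse t" "t *\<^sub>R x"] tp by simp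
    moreover have "inverse t *\<^sub>R (t *\<^sub>R x) = x" using tp by simp
    ultimately have "g x \<le> inverse t * g (t *\<^sub>R x)" by simp
    hence "t * g x \<le> g (t *\<^sub>R x)" using tp by (simp add: field_simps)
    thus ?thesis using hom_le[OF tp, of x] by simp
  qed
  have subadd: "g (x + y) \<le> g x + g y" for x y
  proof (rule field_le_epsilon)
    fix e :: real assume e: "e > 0"
    define r where "r = g x + e/2"
    define s where "s = g y + e/2"
    have rp: "r > 0" "r > g x" "s > 0" "s > g y" using g0[of x] g0[of y] e by (auto simp: r_def s_def)
    have xr: "inverse r *\<^sub>R x \<in> C" and ys: "inverse s *\<^sub>R y \<in> C" using mem rp by blast+
    have "(r/(r+s)) *\<^sub>R (inverse r *\<^sub>R x) + (s/(r+s)) *\<^sub>R (inverse s *\<^sub>R y) \<in> C"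
    proof (rule convexD[OF cv xr ys])
      show "0 \<le> r / (r + s)" "0 \<le> s / (r + s)" using rp by auto
      show "r / (r + s) + s / (r + s) = 1" using rp by (simp add: add_divide_distrib[symmetric])
    qed
    moreover have "(r/(r+s)) *\<^sub>R (inverse r *\<^sub>R x) = inverse (r+s) *\<^sub>R x"
      using rp by (simp add: divide_inverse_commute)
    moreover have "(s/(r+s)) *\<^sub>R (inverse s *\<^sub>R y) = inverse (r+s) *\<^sub>R y"
      using rp by (simp add: divide_inverse_commute)
    ultimately have "inverse (r+s) *\<^sub>R x + inverse (r+s) *\<^sub>R y \<in> C" by metis
    hence "inverse (r+s) *\<^sub>R (x + y) \<in> C" by (simp only: scaleR_add_right)
    hence "g (x + y) \<le> r + s" using low[of "r+s" "x+y"] rp by simp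
    thus "g (x + y) \<le> g x + g y + e" by (simp add: r_def s_def)
  qed
  have "sublin g" unfolding sublin_def using subadd hom by blast
  then obtain \<phi> where phi: "linear \<phi>" "\<forall>x. \<phi> x \<le> g x" "\<phi> z0 = g z0" using hahn_banach by blast
  have "g z0 \<ge> 1"
  proof (rule ccontr)
    assume "\<not> g z0 \<ge> 1"
    hence "inverse 1 *\<^sub>R z0 \<in> C" using mem[of z0 1] by simp
    thus False using z0 by simp
  qed
  moreover have "\<forall>c\<in>C. \<phi> c \<le> 1"
  proof
    fix c assume "c \<in> C"
    hence "g c \<le> 1" using low[of 1 c] by simp
    thus "\<phi> c \<le> 1" using phi(2) order_trans by blast
  qed
  ultimately show ?thesis using phi by metis
qed

lemma tvs_add:
  fixes f g :: "'b::topological_space \<Rightarrow> 'a::{real_vector,topological_space}"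
  assumes tvs: "tvs TYPE('a)" and f: "continuous_on S f" and g: "continuous_on S g"
  shows "continuous_on S (\<lambda>x. f x + g x)"
proof -
  have c: "continuous_on UNIV (\<lambda>(x::'a, y::'a). x + y)" using tvs unfolding tvs_def by blast
  have "continuous_on S (\<lambda>x. (\<lambda>(x::'a, y::'a). x + y) (f x, g x))"
    by (rule continuous_on_compose2[OF c]) (auto intro: continuous_on_Pair f g)
  thus ?thesis by simp
qed

lemma tvs_scale:
  fixes f :: "'b::topological_space \<Rightarrow> 'a::{real_vector,topological_space}" and a :: "'b \<Rightarrow> real"
  assumes tvs: "tvs TYPE('a)" and a: "continuous_on S a" and f: "continuous_on S f"
  shows "continuous_on S (\<lambda>x. a x *\<^sub>R f x)"
proof -
  have c: "continuous_on UNIV (\<lambda>(t::real, x::'a). t *\<^sub>R x)" using tvs unfolding tvs_def by blast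
  have "continuous_on S (\<lambda>x. (\<lambda>(t::real, x::'a). t *\<^sub>R x) (a x, f x))"
    by (rule continuous_on_compose2[OF c]) (auto intro: continuous_on_Pair f a)
  thus ?thesis by simp
qed

lemma tvs_affine:
  fixes c d :: "'a::{real_vector,topological_space}"
  assumes tvs: "tvs TYPE('a)"
  shows "continuous_on UNIV (\<lambda>x::'a. d + s *\<^sub>R x)"
  by (rule tvs_add[OF tvs]) (auto intro!: tvs_scale[OF tvs] continuous_on_const continuous_on_id)

lemma tvs_line:
  fixes c d :: "'a::{real_vector,topological_space}"
  assumes tvs: "tvs TYPE('a)"
  shows "continuous_on UNIV (\<lambda>s::real. d + s *\<^sub>R c)"
  by (rule tvs_add[OF tvs]) (auto intro!: tvs_scale[OF tvs] continuous_on_const continuous_on_id)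

lemma tvs_open_affine:
  fixes d :: "'a::{real_vector,topological_space}"
  assumes tvs: "tvs TYPE('a)" and "open V"
  shows "open {x. d + s *\<^sub>R x \<in> V}"
proof -
  have "{x. d + s *\<^sub>R x \<in> V} = (\<lambda>x. d + s *\<^sub>R x) -` V" by auto
  thus ?thesis using open_vimage[OF assms(2) tvs_affine[OF tvs]] by simp
qed

lemma tvs_absorb:
  fixes x :: "'a::{real_vector,topological_space}"
  assumes tvs: "tvs TYPE('a)" and V: "open V" "0 \<in> V"
  shows "\<exists>e>0. \<forall>s. \<bar>s\<bar> < e \<longrightarrow> s *\<^sub>R x \<in> V"
proof -
  have "open ((\<lambda>s::real. 0 + s *\<^sub>R x) -` V)" using open_vimage[OF V(1) tvs_line[OF tvs]] .
  moreover have "0 \<in> (\<lambda>s::real. 0 + s *\<^sub>R x) -` V" using V by simp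
  ultimately obtain e where e: "e > 0" "ball 0 e \<subseteq> (\<lambda>s::real. 0 + s *\<^sub>R x) -` V"
    using open_contains_ball by blast
  have "\<forall>s. \<bar>s\<bar> < e \<longrightarrow> s *\<^sub>R x \<in> V"
  proof (intro allI impI)
    fix s :: real assume "\<bar>s\<bar> < e"
    hence "s \<in> ball 0 e" by (simp add: dist_real_def)
    thus "s *\<^sub>R x \<in> V" using e by auto
  qed
  thus ?thesis using e by blast
qed

lemma tvs_linear_cont:
  fixes \<phi> :: "'a::{real_vector,topological_space} \<Rightarrow> real"
  assumes tvs: "tvs TYPE('a)" and lin: "linear \<phi>" and W: "open W" "0 \<in> W"
    and bd: "\<And>w. w \<in> W \<Longrightarrow> \<bar>\<phi> w\<bar> \<le> 1"
  shows "continuous_on UNIV \<phi>"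
  unfolding continuous_on_open_vimage[OF open_UNIV]
proof (intro allI impI)
  fix B :: "real set" assume B: "open B"
  have "open (\<phi> -` B)"
    unfolding open_subopen[of "\<phi> -` B"]
  proof
    fix x assume "x \<in> \<phi> -` B"
    then obtain e where e: "e > 0" "ball (\<phi> x) e \<subseteq> B" using B open_contains_ball by blast
    define T where "T = {y. (- (2/e) *\<^sub>R x) + (2/e) *\<^sub>R y \<in> W}"
    have "open T" unfolding T_def by (rule tvs_open_affine[OF tvs W(1)])
    moreover have "x \<in> T" using W unfolding T_def by simp
    moreover have "T \<subseteq> \<phi> -` B"
    proof
      fix y assume "y \<in> T"
      hence "\<bar>\<phi> ((- (2/e) *\<^sub>R x) + (2/e) *\<^sub>R y)\<bar> \<le> 1" using bd unfolding T_def by blast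
      moreover have "\<phi> ((- (2/e) *\<^sub>R x) + (2/e) *\<^sub>R y) = (2/e) * (\<phi> y - \<phi> x)"
        by (simp only: linear_add[OF lin] linear_scale[OF lin]) (simp add: algebra_simps diff_divide_distrib)
      ultimately have "\<bar>(2/e) * (\<phi> y - \<phi> x)\<bar> \<le> 1" by simp
      hence "\<bar>2/e\<bar> * \<bar>\<phi> y - \<phi> x\<bar> \<le> 1" by (simp only: abs_mult)
      hence "(2/e) * \<bar>\<phi> y - \<phi> x\<bar> \<le> 1" using e by simp
      hence "\<bar>\<phi> y - \<phi> x\<bar> \<le> e/2" using e by (simp add: field_simps)
      hence "\<phi> y \<in> ball (\<phi> x) e" using e by (simp add: dist_real_def abs_minus_commute)
      thus "y \<in> \<phi> -` B" using e by auto
    qed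
    ultimately show "\<exists>T. open T \<and> x \<in> T \<and> T \<subseteq> \<phi> -` B" by blast
  qed
  thus "open (\<phi> -` B \<inter> UNIV)" by simp
qed

lemma Gamma_ninf:
  fixes f :: "'a::{real_vector,topological_space} \<Rightarrow> ereal"
  assumes "Gamma f" shows "f x \<noteq> -\<infinity>"
  using assms[unfolded GammaF_def, THEN conjunct1] by simp

lemma Gamma_proper:
  fixes f :: "'a::{real_vector,topological_space} \<Rightarrow> ereal"
  assumes "Gamma f" shows "\<exists>x. f x \<noteq> \<infinity>"
  using assms[unfolded GammaF_def, THEN conjunct2, THEN conjunct1] by simp

lemma Gamma_conv:
  fixes f :: "'a::{real_vector,topological_space} \<Rightarrow> ereal"
  assumes "Gamma f" "0 < t" "t < 1"
  shows "f (t *\<^sub>R x + (1 - t) *\<^sub>R y) \<le> ereal t * f x + ereal (1 - t) * f y"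
  using assms(1)[unfolded GammaF_def, THEN conjunct2, THEN conjunct2, THEN conjunct1] assms(2,3) by simp

lemma Gamma_closed:
  fixes f :: "'a::{real_vector,topological_space} \<Rightarrow> ereal"
  assumes "Gamma f" shows "closed {x. f x \<le> ereal a}"
proof -
  have "closedin euclidean {x \<in> UNIV. f x \<le> ereal a}"
    using assms[unfolded GammaF_def, THEN conjunct2, THEN conjunct2, THEN conjunct2] by simp
  thus ?thesis by simp
qed

lemma epi_conv:
  fixes f :: "'a::{real_vector,topological_space} \<Rightarrow> ereal"
  assumes f: "Gamma f" and h: "f x1 \<le> ereal r1" "f x2 \<le> ereal r2" and u: "0 \<le> u" "0 \<le> v" "u + v = 1"
  shows "f (u *\<^sub>R x1 + v *\<^sub>R x2) \<le> ereal (u * r1 + v * r2)"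
proof (cases "u = 0")
  case True thus ?thesis using h u by simp
next
  case False
  show ?thesis
  proof (cases "v = 0")
    case True thus ?thesis using h u by simp
  next
    case False
    have uu: "0 < u" "u < 1" using \<open>u \<noteq> 0\<close> False u by auto
    have vv: "v = 1 - u" using u by simp
    have "f (u *\<^sub>R x1 + v *\<^sub>R x2) \<le> ereal u * f x1 + ereal (1 - u) * f x2"
      using Gamma_conv[OF f uu, of x1 x2] vv by simp
    also have "\<dots> \<le> ereal u * ereal r1 + ereal (1 - u) * ereal r2"
      by (intro add_mono ereal_mult_left_mono h) (use uu in auto)
    also have "\<dots> = ereal (u * r1 + v * r2)" using vv by simp
    finally show ?thesis .
  qed
qed

lemma sepA:
  fixes f :: "'a::{real_vector,topological_space} \<Rightarrow> ereal"
  assumes tvs: "tvs TYPE('a)" and lc: "locally_convex TYPE('a)" and f: "Gamma f"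
    and fx0: "ereal r0 < f x0"
  shows "\<exists>y\<in>dual. \<exists>\<beta> \<gamma>. \<beta> \<le> 0 \<and> \<gamma> > 0 \<and>
           (\<forall>x r. f x \<le> ereal r \<longrightarrow> y x + \<beta> * r \<le> y x0 + \<beta> * r0 - \<gamma>)"
proof -
  obtain e0 where "f e0 \<noteq> \<infinity>" using Gamma_proper[OF f] by blast
  then obtain er where fe0: "f e0 = ereal er" using Gamma_ninf[OF f, of e0] by (cases "f e0") auto
  obtain z where z: "ereal r0 < ereal z" "ereal z < f x0" using ereal_dense2[OF fx0] by blast
  define \<delta> where "\<delta> = z - r0"
  have dpos: "\<delta> > 0" using z unfolding \<delta>_def by simp
  define U where "U = - {x. f x \<le> ereal z}"
  have oU: "open U" unfolding U_def using Gamma_closed[OF f] by blast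
  define U' where "U' = {v. x0 + (-1) *\<^sub>R v \<in> U}"
  have oU': "open U'" unfolding U'_def by (rule tvs_open_affine[OF tvs oU])
  have "0 \<in> U'" using z unfolding U'_def U_def by auto
  then obtain V where V: "open V" "convex V" "0 \<in> V" "V \<subseteq> U'"
    using lc oU' unfolding locally_convex_def by blast
  define W where "W = {(v, s). v \<in> V \<and> \<bar>s\<bar> < \<delta>}"
  define E where "E = {(x, r). f x \<le> ereal r}"
  define e where "e = (e0, er)"
  define C where "C = {p - e + w | p w. p \<in> E \<and> w \<in> W}"
  have eE: "e \<in> E" unfolding e_def E_def using fe0 by simp
  have WC: "W \<subseteq> C"
  proof
    fix w assume w: "w \<in> W"
    have "w = e - e + w" by simp
    thus "w \<in> C" unfolding C_def using eE w by blast
  qed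
  have absW: "\<exists>t>0. t *\<^sub>R q \<in> W" for q
  proof -
    obtain x r where q: "q = (x, r)" by (cases q)
    obtain \<epsilon> where eps: "\<epsilon> > 0" "\<And>s. \<bar>s\<bar> < \<epsilon> \<Longrightarrow> s *\<^sub>R x \<in> V"
      using tvs_absorb[OF tvs V(1) V(3), of x] by blast
    define t where "t = min (\<epsilon>/2) (\<delta> / (2 * (\<bar>r\<bar> + 1)))"
    have tp: "t > 0" unfolding t_def using eps dpos by (simp add: abs_add_one_gt_zero)
    have "t < \<epsilon>" unfolding t_def using eps by simp
    hence tx: "t *\<^sub>R x \<in> V" using eps tp by simp
    have "t * \<bar>r\<bar> \<le> \<delta> / (2 * (\<bar>r\<bar> + 1)) * \<bar>r\<bar>"
      unfolding t_def by (intro mult_right_mono) auto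
    also have "\<dots> < \<delta>"
    proof -
      have "\<bar>r\<bar> < 2 * (\<bar>r\<bar> + 1)" by simp
      hence "\<bar>r\<bar> / (2 * (\<bar>r\<bar> + 1)) < 1" by (simp add: divide_less_eq abs_add_one_gt_zero)
      hence "\<delta> * (\<bar>r\<bar> / (2 * (\<bar>r\<bar> + 1))) < \<delta> * 1" using dpos by (intro mult_strict_left_mono) auto
      thus ?thesis by simp
    qed
    finally have "\<bar>t * r\<bar> < \<delta>" using tp by (simp add: abs_mult)
    hence "t *\<^sub>R q \<in> W" using tx unfolding q W_def by simp
    thus ?thesis using tp by blast
  qed
  have convW: "convex W"
    unfolding convex_def
  proof (intro ballI allI impI)
    fix p q :: "'a \<times> real" and u v :: real
    assume p: "p \<in> W" and q: "q \<in> W" and uv: "0 \<le> u" "0 \<le> v" "u + v = 1"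
    obtain v1 s1 where p': "p = (v1, s1)" "v1 \<in> V" "\<bar>s1\<bar> < \<delta>" using p unfolding W_def by auto
    obtain v2 s2 where q': "q = (v2, s2)" "v2 \<in> V" "\<bar>s2\<bar> < \<delta>" using q unfolding W_def by auto
    have "u *\<^sub>R v1 + v *\<^sub>R v2 \<in> V" using convexD[OF V(2) p'(2) q'(2)] uv by blast
    moreover have "\<bar>u * s1 + v * s2\<bar> < \<delta>"
    proof -
      have "\<bar>u * s1 + v * s2\<bar> \<le> u * \<bar>s1\<bar> + v * \<bar>s2\<bar>" using uv by (simp add: abs_triangle_ineq[THEN order_trans] abs_mult)
      also have "\<dots> \<le> u * max \<bar>s1\<bar> \<bar>s2\<bar> + v * max \<bar>s1\<bar> \<bar>s2\<bar>" using uv by (intro add_mono mult_left_mono) auto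
      also have "\<dots> = max \<bar>s1\<bar> \<bar>s2\<bar>" using uv by (simp add: distrib_right[symmetric])
      also have "\<dots> < \<delta>" using p' q' by simp
      finally show ?thesis .
    qed
    ultimately show "u *\<^sub>R p + v *\<^sub>R q \<in> W" unfolding W_def p' q' by simp
  qed
  have convC: "convex C"
    unfolding convex_def
  proof (intro ballI allI impI)
    fix a b :: "'a \<times> real" and u v :: real
    assume a: "a \<in> C" and b: "b \<in> C" and uv: "0 \<le> u" "0 \<le> v" "u + v = 1"
    obtain p1 w1 where a': "a = p1 - e + w1" "p1 \<in> E" "w1 \<in> W" using a unfolding C_def by blast
    obtain p2 w2 where b': "b = p2 - e + w2" "p2 \<in> E" "w2 \<in> W" using b unfolding C_def by blast
    have pE: "u *\<^sub>R p1 + v *\<^sub>R p2 \<in> E"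
    proof -
      obtain x1 r1 where "p1 = (x1, r1)" "f x1 \<le> ereal r1" using a'(2) unfolding E_def by auto
      moreover obtain x2 r2 where "p2 = (x2, r2)" "f x2 \<le> ereal r2" using b'(2) unfolding E_def by auto
      ultimately show ?thesis unfolding E_def using epi_conv[OF f _ _, of x1 r1 x2 r2 u v] uv by auto
    qed
    have wW: "u *\<^sub>R w1 + v *\<^sub>R w2 \<in> W" using convexD[OF convW a'(3) b'(3)] uv by blast
    have "u *\<^sub>R a + v *\<^sub>R b = (u *\<^sub>R p1 + v *\<^sub>R p2) - e + (u *\<^sub>R w1 + v *\<^sub>R w2)"
    proof -
      have "u *\<^sub>R a + v *\<^sub>R b = (u *\<^sub>R p1 + v *\<^sub>R p2) - (u + v) *\<^sub>R e + (u *\<^sub>R w1 + v *\<^sub>R w2)"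
        unfolding a'(1) b'(1) by (simp add: algebra_simps)
      thus ?thesis using uv by simp
    qed
    thus "u *\<^sub>R a + v *\<^sub>R b \<in> C" unfolding C_def using pE wW by blast
  qed
  have zW: "0 \<in> W" unfolding W_def using V dpos by (simp add: zero_prod_def)
  define z0 where "z0 = (x0, r0) - e"
  have z0C: "z0 \<notin> C"
  proof
    assume "z0 \<in> C"
    then obtain p w where pw: "z0 = p - e + w" "p \<in> E" "w \<in> W" unfolding C_def by blast
    obtain x r where p: "p = (x, r)" "f x \<le> ereal r" using pw(2) unfolding E_def by auto
    obtain v s where w: "w = (v, s)" "v \<in> V" "\<bar>s\<bar> < \<delta>" using pw(3) unfolding W_def by auto
    have "(x0, r0) = (x + v, r + s)" using pw(1) unfolding z0_def p w by (simp add: algebra_simps)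
    hence xx: "x = x0 + (-1) *\<^sub>R v" and rr: "r = r0 - s" by auto
    have "x \<in> U" using xx w(2) V(4) unfolding U'_def by auto
    moreover have "f x \<le> ereal z"
    proof -
      have "r \<le> z" using rr w(3) unfolding \<delta>_def by simp
      thus ?thesis using p(2) order_trans by fastforce
    qed
    ultimately show False unfolding U_def by simp
  qed
  obtain \<phi> :: "'a \<times> real \<Rightarrow> real" where phi: "linear \<phi>" "\<phi> z0 \<ge> 1" "\<forall>c\<in>C. \<phi> c \<le> 1"
    using sep_gauge[OF convC WC[THEN subsetD, OF zW] _ z0C] absW WC by blast
  define y where "y x = \<phi> (x, 0)" for x
  define \<beta> where "\<beta> = \<phi> (0, 1)"
  have dec: "\<phi> (x, r) = y x + \<beta> * r" for x r
  proof -
    have "(x, r) = (x, 0) + r *\<^sub>R (0::'a, 1::real)" by simp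
    hence "\<phi> (x, r) = \<phi> ((x, 0) + r *\<^sub>R (0::'a, 1::real))" by metis
    also have "\<dots> = \<phi> (x, 0) + r *\<^sub>R \<phi> (0::'a, 1::real)"
      by (simp only: linear_add[OF phi(1)] linear_scale[OF phi(1)])
    also have "\<dots> = y x + \<beta> * r" unfolding y_def \<beta>_def by simp
    finally show ?thesis .
  qed
  have liny: "linear y"
  proof (rule linearI)
    fix a b show "y (a + b) = y a + y b" unfolding y_def
      using linear_add[OF phi(1), of "(a, 0)" "(b, 0)"] by simp
  next
    fix c a show "y (c *\<^sub>R a) = c *\<^sub>R y a" unfolding y_def
      using linear_scale[OF phi(1), of c "(a, 0)"] by simp
  qed
  have ycont: "continuous_on UNIV y"
  proof (rule tvs_linear_cont[OF tvs liny])
    show "open (V \<inter> {v. 0 + (-1) *\<^sub>R v \<in> V})" by (intro open_Int V(1) tvs_open_affine[OF tvs V(1)])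
    show "0 \<in> V \<inter> {v. 0 + (-1) *\<^sub>R v \<in> V}" using V by simp
  next
    fix w assume "w \<in> V \<inter> {v. 0 + (-1) *\<^sub>R v \<in> V}"
    hence w: "(w, 0) \<in> W" "(-w, 0) \<in> W" unfolding W_def using dpos by auto
    have "y w \<le> 1" using phi(3) WC w(1) unfolding y_def by blast
    moreover have "y (-w) \<le> 1" using phi(3) WC w(2) unfolding y_def by blast
    moreover have "y (-w) = - y w" using linear_neg[OF liny] by simp
    ultimately show "\<bar>y w\<bar> \<le> 1" by simp
  qed
  have ydual: "y \<in> dual" unfolding dual_def using liny ycont by blast
  obtain t where t: "t > 0" "t *\<^sub>R z0 \<in> W" using absW by blast
  have gap: "y x + \<beta> * r \<le> y x0 + \<beta> * r0 - t" if "f x \<le> ereal r" for x r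
  proof -
    have "(x, r) \<in> E" unfolding E_def using that by simp
    hence "(x, r) - e + t *\<^sub>R z0 \<in> C" unfolding C_def using t by blast
    hence "\<phi> ((x, r) - e + t *\<^sub>R z0) \<le> 1" using phi(3) by blast
    hence "\<phi> (x, r) - \<phi> e + t * \<phi> z0 \<le> 1"
      using linear_add[OF phi(1)] linear_diff[OF phi(1)] linear_scale[OF phi(1)] by simp
    moreover have "\<phi> z0 = \<phi> (x0, r0) - \<phi> e" unfolding z0_def using linear_diff[OF phi(1)] by simp
    moreover have "t \<le> t * \<phi> z0" using phi(2) t(1) by simp
    ultimately have "\<phi> (x, r) \<le> \<phi> (x0, r0) - t" using phi(2) by linarith
    thus ?thesis unfolding dec .
  qed
  have bneg: "\<beta> \<le> 0"
  proof (rule ccontr)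
    assume "\<not> \<beta> \<le> 0"
    hence bp: "\<beta> > 0" by simp
    define K where "K = (\<bar>y x0 + \<beta> * r0 - t - y e0 - \<beta> * er\<bar> + 1) / \<beta>"
    have Kp: "K \<ge> 0" unfolding K_def using bp by simp
    have "f e0 \<le> ereal (er + K)" using fe0 Kp by simp
    hence "y e0 + \<beta> * (er + K) \<le> y x0 + \<beta> * r0 - t" by (rule gap)
    moreover have "\<beta> * K = \<bar>y x0 + \<beta> * r0 - t - y e0 - \<beta> * er\<bar> + 1" unfolding K_def using bp by simp
    ultimately show False by (simp add: distrib_left)
  qed
  show ?thesis using ydual bneg t(1) gap by blast
qed


lemma dual_scale: "y \<in> dual \<Longrightarrow> (\<lambda>x. a * y x) \<in> dual"
  unfolding dual_def
proof (clarify, intro conjI)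
  assume "linear y" "continuous_on UNIV y"
  show "linear (\<lambda>x. a * y x)"
    by (rule linearI) (simp_all add: linear_add[OF \<open>linear y\<close>] linear_scale[OF \<open>linear y\<close>] algebra_simps)
  show "continuous_on UNIV (\<lambda>x. a * y x)" by (intro continuous_intros \<open>continuous_on UNIV y\<close>)
qed

lemma dual_add: "y1 \<in> dual \<Longrightarrow> y2 \<in> dual \<Longrightarrow> (\<lambda>x. y1 x + y2 x) \<in> dual"
  unfolding dual_def
proof (clarify, intro conjI)
  assume "linear y1" "continuous_on UNIV y1" "linear y2" "continuous_on UNIV y2"
  show "linear (\<lambda>x. y1 x + y2 x)" using \<open>linear y1\<close> \<open>linear y2\<close> by (rule linear_compose_add)
  show "continuous_on UNIV (\<lambda>x. y1 x + y2 x)" by (intro continuous_intros) fact+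
qed

lemma dual_linear: "y \<in> dual \<Longrightarrow> linear y" unfolding dual_def by blast

lemma fromSep:
  fixes f :: "'a::{real_vector,topological_space} \<Rightarrow> ereal"
  assumes f: "Gamma f" and y: "y \<in> dual" and b: "\<beta> < 0" and g: "\<gamma> > 0"
    and gap: "\<And>x r. f x \<le> ereal r \<Longrightarrow> y x + \<beta> * r \<le> y x0 + \<beta> * r0 - \<gamma>"
  shows "\<exists>y'\<in>dual. \<exists>c. (\<forall>x. ereal (y' x - c) \<le> f x) \<and> r0 < y' x0 - c"
proof -
  define b where "b = - \<beta>"
  have bp: "b > 0" using \<open>\<beta> < 0\<close> unfolding b_def by simp
  define y' where "y' x = (1 / b) * y x" for x
  define c where "c = y' x0 - r0 - \<gamma> / b"
  have "y' \<in> dual" unfolding y'_def by (rule dual_scale[OF y])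
  moreover have "ereal (y' x - c) \<le> f x" for x
  proof (cases "f x")
    case (real r)
    have "y x + \<beta> * r \<le> y x0 + \<beta> * r0 - \<gamma>" using gap real by simp
    hence "y x - b * r \<le> y x0 - b * r0 - \<gamma>" unfolding b_def by simp
    hence "(y x - b * r) / b \<le> (y x0 - b * r0 - \<gamma>) / b" by (rule divide_right_mono) (use bp in simp)
    moreover have "(y x - b * r) / b = y' x - r" unfolding y'_def using bp by (simp add: diff_divide_distrib)
    moreover have "(y x0 - b * r0 - \<gamma>) / b = c" unfolding y'_def c_def using bp by (simp add: diff_divide_distrib)
    ultimately have "y' x - r \<le> c" by simp
    thus ?thesis using real by simp
  next
    case PInf thus ?thesis by simp
  next
    case MInf thus ?thesis using Gamma_ninf[OF f] by simp
  qed
  moreover have "r0 < y' x0 - c" unfolding c_def using g bp by simp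
  ultimately show ?thesis by blast
qed

lemma fm_finite:
  fixes f :: "'a::{real_vector,topological_space} \<Rightarrow> ereal"
  assumes tvs: "tvs TYPE('a)" and lc: "locally_convex TYPE('a)" and f: "Gamma f"
    and fx0: "ereal r0 < f x0" and fin: "f x0 \<noteq> \<infinity>"
  shows "\<exists>y\<in>dual. \<exists>c. (\<forall>x. ereal (y x - c) \<le> f x) \<and> r0 < y x0 - c"
proof -
  obtain y \<beta> \<gamma> where y: "y \<in> dual" "\<beta> \<le> 0" "\<gamma> > 0"
    and gap: "\<And>x r. f x \<le> ereal r \<Longrightarrow> y x + \<beta> * r \<le> y x0 + \<beta> * r0 - \<gamma>"
    using sepA[OF tvs lc f fx0] by blast
  obtain r1 where r1: "f x0 = ereal r1" using fin Gamma_ninf[OF f, of x0] by (cases "f x0") auto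
  have "\<beta> \<noteq> 0"
  proof
    assume "\<beta> = 0"
    thus False using gap[of x0 r1] r1 y(3) by simp
  qed
  hence "\<beta> < 0" using y(2) by simp
  thus ?thesis using fromSep[OF f y(1) _ y(3) gap] by blast
qed

theorem fm_minorant:
  fixes f :: "'a::{real_vector,topological_space} \<Rightarrow> ereal"
  assumes tvs: "tvs TYPE('a)" and lc: "locally_convex TYPE('a)" and f: "Gamma f"
    and fx0: "ereal r0 < f x0"
  shows "\<exists>y\<in>dual. \<exists>c. (\<forall>x. ereal (y x - c) \<le> f x) \<and> r0 < y x0 - c"
proof -
  obtain y \<beta> \<gamma> where y: "y \<in> dual" "\<beta> \<le> 0" "\<gamma> > 0"
    and gap: "\<And>x r. f x \<le> ereal r \<Longrightarrow> y x + \<beta> * r \<le> y x0 + \<beta> * r0 - \<gamma>"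
    using sepA[OF tvs lc f fx0] by blast
  show ?thesis
  proof (cases "\<beta> < 0")
    case True thus ?thesis using fromSep[OF f y(1) _ y(3) gap] by blast
  next
    case False
    hence b0: "\<beta> = 0" using y(2) by simp
    obtain e0 where "f e0 \<noteq> \<infinity>" using Gamma_proper[OF f] by blast
    then obtain er where fe0: "f e0 = ereal er" using Gamma_ninf[OF f, of e0] by (cases "f e0") auto
    obtain y1 c1 where y1: "y1 \<in> dual" "\<And>x. ereal (y1 x - c1) \<le> f x"
      using fm_finite[OF tvs lc f, of "er - 1" e0] fe0 by auto
    define k where "k = max 0 ((r0 - (y1 x0 - c1)) / \<gamma> + 1)"
    have k0: "k \<ge> 0" unfolding k_def by simp
    have "(r0 - (y1 x0 - c1)) / \<gamma> + 1 \<le> k" unfolding k_def by simp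
    hence "(r0 - (y1 x0 - c1)) + \<gamma> \<le> k * \<gamma>" using y(3) by (simp add: field_simps)
    hence kx0: "r0 < y1 x0 - c1 + k * \<gamma>" using y(3) by simp
    define y2 where "y2 x = y1 x + k * y x" for x
    define c2 where "c2 = c1 + k * (y x0 - \<gamma>)"
    have "y2 \<in> dual" unfolding y2_def by (intro dual_add dual_scale y1(1) y(1))
    moreover have "ereal (y2 x - c2) \<le> f x" for x
    proof (cases "f x")
      case (real r)
      have "y x \<le> y x0 - \<gamma>" using gap[of x r] real b0 by simp
      hence "k * (y x - (y x0 - \<gamma>)) \<le> 0" using k0 by (simp add: mult_nonneg_nonpos)
      hence "y2 x - c2 \<le> y1 x - c1" unfolding y2_def c2_def by (simp add: algebra_simps)
      thus ?thesis using y1(2)[of x] order_trans by (metis ereal_less_eq(3))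
    qed (use Gamma_ninf[OF f] in auto)
    moreover have "r0 < y2 x0 - c2" unfolding y2_def c2_def using kx0 by (simp add: algebra_simps)
    ultimately show ?thesis by blast
  qed
qed

definition dq :: "('a::real_vector \<Rightarrow> ereal) \<Rightarrow> 'a \<Rightarrow> 'a \<Rightarrow> real \<Rightarrow> ereal" where
  "dq f x u t = (f (x + t *\<^sub>R u) - f x) / ereal t"

definition Rf :: "('a::real_vector \<Rightarrow> ereal) \<Rightarrow> 'a \<Rightarrow> 'a \<Rightarrow> ereal" where
  "Rf f x u = (SUP t\<in>{0<..}. dq f x u t)"

lemma mono_Lim:
  fixes g :: "real \<Rightarrow> ereal"
  assumes mono: "\<And>s t. 0 < s \<Longrightarrow> s \<le> t \<Longrightarrow> g s \<le> g t"
  shows "Lim at_top g = (SUP t\<in>{0<..}. g t)"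
proof (rule tendsto_Lim)
  show "\<not> trivial_limit (at_top :: real filter)" by simp
  show "(g \<longlongrightarrow> (SUP t\<in>{0<..}. g t)) at_top"
  proof (rule order_tendstoI)
    fix a assume "a < (SUP t\<in>{0<..}. g t)"
    then obtain t0 where t0: "t0 > 0" "a < g t0" using less_SUP_iff by (metis greaterThan_iff)
    have "\<forall>t\<ge>t0. a < g t" using t0 mono by (meson less_le_trans)
    thus "\<forall>\<^sub>F t in at_top. a < g t" unfolding eventually_at_top_linorder by blast
  next
    fix a assume a: "(SUP t\<in>{0<..}. g t) < a"
    have "\<forall>t\<ge>1. g t < a"
    proof (intro allI impI)
      fix t :: real assume "t \<ge> 1"
      hence "g t \<le> (SUP t\<in>{0<..}. g t)" by (intro SUP_upper) simp
      thus "g t < a" using a by simp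
    qed
    thus "\<forall>\<^sub>F t in at_top. g t < a" unfolding eventually_at_top_linorder by blast
  qed
qed

lemma dq_le_iff:
  assumes "f x = ereal a" "t > 0"
  shows "dq f x u t \<le> ereal c \<longleftrightarrow> f (x + t *\<^sub>R u) \<le> ereal (a + t * c)"
proof (cases "f (x + t *\<^sub>R u)")
  case (real b)
  have "dq f x u t = ereal ((b - a) / t)" unfolding dq_def using assms real by simp
  moreover have "(b - a) / t \<le> c \<longleftrightarrow> b \<le> a + t * c" using assms(2) by (simp add: field_simps)
  ultimately show ?thesis using real by simp
next
  case PInf
  have "dq f x u t = \<infinity>" unfolding dq_def using assms PInf by simp
  thus ?thesis using PInf by simp
next
  case MInf
  have "dq f x u t = -\<infinity>" unfolding dq_def using assms MInf by simp
  thus ?thesis using MInf by simp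
qed

lemma dq_ninf:
  fixes f :: "'a::{real_vector,topological_space} \<Rightarrow> ereal"
  assumes f: "Gamma f" and "f x = ereal a" "t > 0"
  shows "dq f x u t \<noteq> -\<infinity>"
  using Gamma_ninf[OF f, of "x + t *\<^sub>R u"] assms unfolding dq_def
  by (cases "f (x + t *\<^sub>R u)") auto

lemma dq_mono:
  fixes f :: "'a::{real_vector,topological_space} \<Rightarrow> ereal"
  assumes f: "Gamma f" and fx: "f x = ereal a" and s: "0 < s" "s \<le> t"
  shows "dq f x u s \<le> dq f x u t"
proof (cases "s = t")
  case True thus ?thesis by simp
next
  case False
  hence st: "s < t" using s by simp
  define l where "l = s / t"
  have l: "0 < l" "l < 1" using s st unfolding l_def by auto
  have pt: "x + s *\<^sub>R u = l *\<^sub>R (x + t *\<^sub>R u) + (1 - l) *\<^sub>R x"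
    using s st unfolding l_def by (simp add: algebra_simps)
  show ?thesis
  proof (cases "f (x + t *\<^sub>R u)")
    case PInf
    have "dq f x u t = \<infinity>" unfolding dq_def using fx PInf s st by simp
    thus ?thesis by simp
  next
    case MInf thus ?thesis using Gamma_ninf[OF f] by simp
  next
    case (real b)
    have "f (x + s *\<^sub>R u) \<le> ereal (l * b + (1 - l) * a)"
      unfolding pt by (rule epi_conv[OF f]) (use real fx l in auto)
    moreover obtain c where c: "f (x + s *\<^sub>R u) = ereal c"
      using calculation Gamma_ninf[OF f, of "x + s *\<^sub>R u"] by (cases "f (x + s *\<^sub>R u)") auto
    ultimately have cle: "c \<le> l * b + (1 - l) * a" by simp
    have "(c - a) / s \<le> (l * b + (1 - l) * a - a) / s" using cle s by (simp add: divide_right_mono)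
    also have "(l * b + (1 - l) * a - a) / s = (b - a) / t" unfolding l_def using s st by (simp add: field_simps)
    finally have "(c - a) / s \<le> (b - a) / t" .
    moreover have "dq f x u s = ereal ((c - a) / s)" unfolding dq_def using c fx s by simp
    moreover have "dq f x u t = ereal ((b - a) / t)" unfolding dq_def using real fx s st by simp
    ultimately show ?thesis by simp
  qed
qed

lemma Lim_dq:
  fixes f :: "'a::{real_vector,topological_space} \<Rightarrow> ereal"
  assumes f: "Gamma f" and fx: "f x = ereal a"
  shows "Lim at_top (dq f x u) = Rf f x u"
  unfolding Rf_def by (rule mono_Lim) (rule dq_mono[OF f fx])

lemma dq_le_Rf: "t > 0 \<Longrightarrow> dq f x u t \<le> Rf f x u"
  unfolding Rf_def by (intro SUP_upper) simp

lemma Rf_ninf: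
  fixes f :: "'a::{real_vector,topological_space} \<Rightarrow> ereal"
  assumes f: "Gamma f" and fx: "f x = ereal a"
  shows "Rf f x u \<noteq> -\<infinity>"
  using dq_le_Rf[of 1 f x u] dq_ninf[OF f fx, of 1 u] by auto

lemma Rf_indep:
  fixes f :: "'a::{real_vector,topological_space} \<Rightarrow> ereal"
  assumes tvs: "tvs TYPE('a)" and f: "Gamma f" and f0: "f x0 = ereal b0" and f1: "f x1 = ereal b1"
  shows "Rf f x1 u \<le> Rf f x0 u"
proof (cases "Rf f x0 u")
  case PInf thus ?thesis by simp
next
  case MInf thus ?thesis using Rf_ninf[OF f f0] by simp
next
  case (real \<alpha>)
  have "dq f x1 u s \<le> ereal \<alpha>" if sp: "s > 0" for s
  proof (rule ccontr)
    assume "\<not> dq f x1 u s \<le> ereal \<alpha>"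
    hence "ereal (b1 + s * \<alpha>) < f (x1 + s *\<^sub>R u)" using dq_le_iff[of f x1 b1 s u \<alpha>] f1 sp by simp
    then obtain z where z: "ereal (b1 + s * \<alpha>) < ereal z" "ereal z < f (x1 + s *\<^sub>R u)"
      using ereal_dense2 by blast
    define \<epsilon> where "\<epsilon> = z - (b1 + s * \<alpha>)"
    have ep: "\<epsilon> > 0" using z unfolding \<epsilon>_def by simp
    define Op where "Op = - {y. f y \<le> ereal z}"
    have oO: "open Op" unfolding Op_def using Gamma_closed[OF f] by blast
    define p where "p l = (x1 + s *\<^sub>R u) + l *\<^sub>R (x0 - x1)" for l :: real
    have "open (p -` Op)" unfolding p_def by (rule open_vimage[OF oO tvs_line[OF tvs]])
    moreover have "0 \<in> p -` Op" using z unfolding p_def Op_def by simp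
    ultimately obtain e' where e': "e' > 0" "ball 0 e' \<subseteq> p -` Op" using open_contains_ball by blast
    define l where "l = min (e'/2) (min (1/2) (\<epsilon> / (2 * (\<bar>b0 - b1\<bar> + 1))))"
    have d: "0 < \<epsilon> / (2 * (\<bar>b0 - b1\<bar> + 1))" using ep by (intro divide_pos_pos) (auto intro: add_nonneg_pos)
    have lp: "l > 0" unfolding l_def using e' d by (simp only: min_less_iff_conj) simp
    have l1: "l < 1" unfolding l_def by simp
    have "l \<in> ball 0 e'" using lp e' unfolding l_def by (simp add: dist_real_def)
    hence pO: "p l \<in> Op" using e' by blast
    have lb: "l * \<bar>b0 - b1\<bar> < \<epsilon>"
    proof -
      have "l * \<bar>b0 - b1\<bar> \<le> (\<epsilon> / (2 * (\<bar>b0 - b1\<bar> + 1))) * \<bar>b0 - b1\<bar>"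
        unfolding l_def by (intro mult_right_mono) auto
      also have "\<dots> < \<epsilon>"
      proof -
        have pos: "(0::real) < 2 * (\<bar>b0 - b1\<bar> + 1)" by (intro mult_pos_pos) (auto intro: add_nonneg_pos)
        have "\<bar>b0 - b1\<bar> / (2 * (\<bar>b0 - b1\<bar> + 1)) < 1"
          unfolding pos_divide_less_eq[OF pos] using abs_ge_zero[of "b0-b1"] by (auto simp: algebra_simps)
        hence "\<epsilon> * (\<bar>b0 - b1\<bar> / (2 * (\<bar>b0 - b1\<bar> + 1))) < \<epsilon> * 1" using ep by (intro mult_strict_left_mono) auto
        thus ?thesis by simp
      qed
      finally show ?thesis .
    qed
    define t where "t = s / l"
    have tp: "t > 0" unfolding t_def using sp lp by simp
    have "dq f x0 u t \<le> ereal \<alpha>" using dq_le_Rf[OF tp, of f x0 u] real by simp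
    hence ft: "f (x0 + t *\<^sub>R u) \<le> ereal (b0 + t * \<alpha>)" using dq_le_iff[of f x0 b0 t u \<alpha>] f0 tp by simp
    have "f ((1 - l) *\<^sub>R x1 + l *\<^sub>R (x0 + t *\<^sub>R u)) \<le> ereal ((1 - l) * b1 + l * (b0 + t * \<alpha>))"
      by (rule epi_conv[OF f]) (use f1 ft lp l1 in auto)
    moreover have "(1 - l) *\<^sub>R x1 + l *\<^sub>R (x0 + t *\<^sub>R u) = p l"
      unfolding p_def t_def using lp by (simp add: algebra_simps)
    moreover have "(1 - l) * b1 + l * (b0 + t * \<alpha>) \<le> z"
    proof -
      have "(1 - l) * b1 + l * (b0 + t * \<alpha>) = b1 + s * \<alpha> + l * (b0 - b1)"
        unfolding t_def using lp by (simp add: algebra_simps)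
      also have "\<dots> \<le> b1 + s * \<alpha> + l * \<bar>b0 - b1\<bar>" using lp by (simp add: mult_left_mono)
      also have "\<dots> \<le> z" using lb unfolding \<epsilon>_def by simp
      finally show ?thesis .
    qed
    ultimately have "f (p l) \<le> ereal z" by (metis ereal_less_eq(3) order_trans)
    thus False using pO unfolding Op_def by simp
  qed
  hence "Rf f x1 u \<le> ereal \<alpha>" unfolding Rf_def by (intro SUP_least) simp
  thus ?thesis using real by simp
qed

lemma Rf_eq:
  fixes f :: "'a::{real_vector,topological_space} \<Rightarrow> ereal"
  assumes tvs: "tvs TYPE('a)" and f: "Gamma f" and f0: "f x0 = ereal b0" and f1: "f x1 = ereal b1"
  shows "Rf f x1 u = Rf f x0 u"
  by (rule antisym[OF Rf_indep[OF tvs f f0 f1] Rf_indep[OF tvs f f1 f0]])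

lemma rec_Rf:
  fixes f :: "'a::{real_vector,topological_space} \<Rightarrow> ereal"
  assumes tvs: "tvs TYPE('a)" and f: "Gamma f" and fx: "f x = ereal a"
  shows "rec f u = Rf f x u"
proof -
  define v0 where "v0 = (SOME v. v \<in> (UNIV::'a set) \<and> \<bar>f v\<bar> \<noteq> \<infinity>)"
  have "\<exists>v. v \<in> (UNIV::'a set) \<and> \<bar>f v\<bar> \<noteq> \<infinity>" using fx by (intro exI[of _ x]) simp
  hence "\<bar>f v0\<bar> \<noteq> \<infinity>" unfolding v0_def by (metis (mono_tags, lifting) someI_ex)
  then obtain b where b: "f v0 = ereal b" by (cases "f v0") auto
  have "rec f u = Lim at_top (dq f v0 u)" unfolding recc_def v0_def dq_def Let_def by simp
  also have "\<dots> = Rf f v0 u" by (rule Lim_dq[OF f b])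
  also have "\<dots> = Rf f x u" by (rule Rf_eq[OF tvs f fx b])
  finally show ?thesis .
qed


lemma closed_le_comp:
  fixes f :: "'a::{real_vector,topological_space} \<Rightarrow> ereal" and h :: "'b::topological_space \<Rightarrow> 'a"
  assumes f: "Gamma f" and h: "continuous_on UNIV h" and k: "continuous_on UNIV k"
  shows "closed {u. f (h u) \<le> ereal (k u)}"
proof -
  have eq: "- {u. f (h u) \<le> ereal (k u)} = (\<Union>z. (h -` (- {y. f y \<le> ereal z})) \<inter> (k -` {..<z}))"
  proof (intro set_eqI iffI)
    fix u assume "u \<in> - {u. f (h u) \<le> ereal (k u)}"
    hence "ereal (k u) < f (h u)" by auto
    then obtain z where "ereal (k u) < ereal z" "ereal z < f (h u)" using ereal_dense2 by blast
    thus "u \<in> (\<Union>z. (h -` (- {y. f y \<le> ereal z})) \<inter> (k -` {..<z}))" by (auto intro!: exI[of _ z])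
  next
    fix u assume "u \<in> (\<Union>z. (h -` (- {y. f y \<le> ereal z})) \<inter> (k -` {..<z}))"
    then obtain z where "\<not> f (h u) \<le> ereal z" "k u < z" by auto
    thus "u \<in> - {u. f (h u) \<le> ereal (k u)}" by (auto simp: not_le) (metis ereal_less_eq(3) less_imp_le not_le order_trans)
  qed
  have "open (- {u. f (h u) \<le> ereal (k u)})" unfolding eq
    by (intro open_UN ballI open_Int open_vimage[OF _ h] open_vimage[OF _ k] open_lessThan)
       (use Gamma_closed[OF f] in auto)
  thus ?thesis by (simp add: closed_def)
qed

context
  fixes f :: "'a::{real_vector,topological_space} \<Rightarrow> ereal"
  assumes tvs: "tvs TYPE('a)" and f: "Gamma f"
begin

lemma rec_ninf: "rec f u \<noteq> -\<infinity>"
proof -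
  obtain x where "f x \<noteq> \<infinity>" using Gamma_proper[OF f] by blast
  then obtain a where a: "f x = ereal a" using Gamma_ninf[OF f, of x] by (cases "f x") auto
  show ?thesis using rec_Rf[OF tvs f a] Rf_ninf[OF f a] by simp
qed

lemma rec_bound:
  assumes fx: "f x = ereal a" and t: "t > 0" and r: "rec f u = ereal \<alpha>"
  shows "f (x + t *\<^sub>R u) \<le> ereal (a + t * \<alpha>)"
proof -
  have "dq f x u t \<le> ereal \<alpha>" using dq_le_Rf[OF t, of f x u] rec_Rf[OF tvs f fx, of u] r by simp
  thus ?thesis using dq_le_iff[of f x a t u \<alpha>] fx t by simp
qed

lemma rec_le_iff:
  assumes fx: "f x = ereal a"
  shows "rec f u \<le> ereal c \<longleftrightarrow> (\<forall>t>0. f (x + t *\<^sub>R u) \<le> ereal (a + t * c))"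
proof -
  have "rec f u \<le> ereal c \<longleftrightarrow> (\<forall>t\<in>{0<..}. dq f x u t \<le> ereal c)"
    unfolding rec_Rf[OF tvs f fx] Rf_def by (rule SUP_le_iff)
  also have "\<dots> \<longleftrightarrow> (\<forall>t>0. f (x + t *\<^sub>R u) \<le> ereal (a + t * c))"
    using dq_le_iff[of f x a _ u c] fx by auto
  finally show ?thesis .
qed

lemma rec_zero: "rec f 0 = 0"
proof -
  obtain x where "f x \<noteq> \<infinity>" using Gamma_proper[OF f] by blast
  then obtain a where a: "f x = ereal a" using Gamma_ninf[OF f, of x] by (cases "f x") auto
  have "dq f x 0 t = 0" if "t > 0" for t unfolding dq_def using a that by simp
  hence "dq f x 0 ` {0<..} = (\<lambda>_. 0) ` {(0::real)<..}" by (intro image_cong) auto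
  also have "\<dots> = {0}" by (rule image_constant) (rule greaterThan_iff[THEN iffD2, of 0 1], simp)
  finally have "dq f x 0 ` {0<..} = {0}" .
  hence "Rf f x 0 = 0" unfolding Rf_def by simp
  thus ?thesis using rec_Rf[OF tvs f a] by simp
qed

lemma rec_subadd: "rec f (u + v) \<le> rec f u + rec f v"
proof (cases "rec f u = \<infinity> \<or> rec f v = \<infinity>")
  case True thus ?thesis using rec_ninf[of u] rec_ninf[of v] by auto
next
  case False
  then obtain \<alpha> \<beta> where ab: "rec f u = ereal \<alpha>" "rec f v = ereal \<beta>"
    using rec_ninf[of u] rec_ninf[of v] by (cases "rec f u"; cases "rec f v") auto
  obtain x where "f x \<noteq> \<infinity>" using Gamma_proper[OF f] by blast
  then obtain a where a: "f x = ereal a" using Gamma_ninf[OF f, of x] by (cases "f x") auto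
  have "\<forall>t>0. f (x + t *\<^sub>R (u + v)) \<le> ereal (a + t * (\<alpha> + \<beta>))"
  proof (intro allI impI)
    fix t :: real assume t: "t > 0"
    have 1: "f (x + (2*t) *\<^sub>R u) \<le> ereal (a + (2*t) * \<alpha>)" using rec_bound[OF a _ ab(1)] t by simp
    have 2: "f (x + (2*t) *\<^sub>R v) \<le> ereal (a + (2*t) * \<beta>)" using rec_bound[OF a _ ab(2)] t by simp
    have "f ((1/2) *\<^sub>R (x + (2*t) *\<^sub>R u) + (1/2) *\<^sub>R (x + (2*t) *\<^sub>R v))
          \<le> ereal ((1/2) * (a + (2*t) * \<alpha>) + (1/2) * (a + (2*t) * \<beta>))"
      by (rule epi_conv[OF f 1 2]) auto
    moreover have "(1/2) *\<^sub>R (x + (2*t) *\<^sub>R u) + (1/2) *\<^sub>R (x + (2*t) *\<^sub>R v) = x + t *\<^sub>R (u + v)"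
      by (simp add: algebra_simps) (metis field_sum_of_halves scaleR_add_left scaleR_one)
    moreover have "(1/2) * (a + (2*t) * \<alpha>) + (1/2) * (a + (2*t) * \<beta>) = a + t * (\<alpha> + \<beta>)"
      by (simp add: algebra_simps)
    ultimately show "f (x + t *\<^sub>R (u + v)) \<le> ereal (a + t * (\<alpha> + \<beta>))" by simp
  qed
  hence "rec f (u + v) \<le> ereal (\<alpha> + \<beta>)" using rec_le_iff[OF a] by blast
  thus ?thesis using ab by simp
qed

lemma rec_hom_le:
  assumes s: "s > 0"
  shows "rec f (s *\<^sub>R u) \<le> ereal s * rec f u"
proof (cases "rec f u")
  case PInf thus ?thesis using s by simp
next
  case MInf thus ?thesis using rec_ninf by simp
next
  case (real \<alpha>)
  obtain x where "f x \<noteq> \<infinity>" using Gamma_proper[OF f] by blast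
  then obtain a where a: "f x = ereal a" using Gamma_ninf[OF f, of x] by (cases "f x") auto
  have "\<forall>t>0. f (x + t *\<^sub>R (s *\<^sub>R u)) \<le> ereal (a + t * (s * \<alpha>))"
  proof (intro allI impI)
    fix t :: real assume t: "t > 0"
    have "f (x + (t * s) *\<^sub>R u) \<le> ereal (a + (t * s) * \<alpha>)" using rec_bound[OF a _ real] t s by simp
    thus "f (x + t *\<^sub>R (s *\<^sub>R u)) \<le> ereal (a + t * (s * \<alpha>))" by (simp add: algebra_simps)
  qed
  hence "rec f (s *\<^sub>R u) \<le> ereal (s * \<alpha>)" using rec_le_iff[OF a] by blast
  thus ?thesis using real by simp
qed

lemma rec_hom:
  assumes s: "s > 0"
  shows "rec f (s *\<^sub>R u) = ereal s * rec f u"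
proof (rule antisym)
  show "rec f (s *\<^sub>R u) \<le> ereal s * rec f u" by (rule rec_hom_le[OF s])
  have "rec f u = rec f (inverse s *\<^sub>R (s *\<^sub>R u))" using s by simp
  also have "\<dots> \<le> ereal (inverse s) * rec f (s *\<^sub>R u)" by (rule rec_hom_le) (use s in simp)
  finally have "ereal s * rec f u \<le> ereal s * (ereal (inverse s) * rec f (s *\<^sub>R u))"
    by (rule ereal_mult_left_mono) (use s in simp)
  also have "\<dots> = rec f (s *\<^sub>R u)"
    by (simp add: mult.assoc[symmetric] s times_ereal.simps(1)[symmetric] del: times_ereal.simps) (use s in simp)
  finally show "ereal s * rec f u \<le> rec f (s *\<^sub>R u)" .
qed

lemma rec_neg_sum: "0 \<le> rec f u + rec f (- u)"
  using rec_subadd[of u "-u"] rec_zero by simp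

lemma rec_closed:
  assumes g: "continuous_on UNIV g"
  shows "closed {u. rec f u \<le> ereal (g u)}"
proof -
  obtain x where "f x \<noteq> \<infinity>" using Gamma_proper[OF f] by blast
  then obtain a where a: "f x = ereal a" using Gamma_ninf[OF f, of x] by (cases "f x") auto
  have eq: "{u. rec f u \<le> ereal (g u)} = (\<Inter>t\<in>{0<..}. {u. f (x + t *\<^sub>R u) \<le> ereal (a + t * g u)})"
    using rec_le_iff[OF a] by auto
  show ?thesis unfolding eq
    by (intro closed_INT ballI closed_le_comp[OF f] tvs_affine[OF tvs] continuous_intros g)
qed

end

instantiation "fun" :: (type, real_vector) real_vector
begin
definition scaleR_fun :: "real \<Rightarrow> ('a \<Rightarrow> 'b) \<Rightarrow> 'a \<Rightarrow> 'b" where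
  "scaleR_fun r g = (\<lambda>x. r *\<^sub>R g x)"
instance
  by standard (simp_all add: scaleR_fun_def fun_eq_iff scaleR_add_right scaleR_add_left)
end

lemma scaleR_fun_apply [simp]: "(r *\<^sub>R g) x = r *\<^sub>R g x"
  by (simp add: scaleR_fun_def)

lemma sum_fun_apply': "(\<Sum>i\<in>F. g i) x = (\<Sum>i\<in>F. g i x)"
  by (induction F rule: infinite_finite_induct) auto

lemma topspace_weakstar [simp]: "topspace weakstar = dual"
  unfolding weakstar_def by simp

lemma ws_closed_pre:
  assumes "closed C"
  shows "closedin weakstar {y \<in> dual. y u \<in> C}"
proof -
  have "closedin (product_topology (\<lambda>_. euclideanreal) UNIV)
          {x \<in> topspace (product_topology (\<lambda>_. euclideanreal) UNIV). x u \<in> C}"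
    by (rule closedin_continuous_map_preimage[OF continuous_map_product_projection]) (use assms in auto)
  hence "closedin (product_topology (\<lambda>_. euclideanreal) UNIV) {x. x u \<in> C}" by simp
  moreover have "{y \<in> dual. y u \<in> C} = {x. x u \<in> C} \<inter> dual" by auto
  ultimately show ?thesis unfolding weakstar_def closedin_subtopology by blast
qed

lemma ws_closed_le: "closedin weakstar {y \<in> dual. y u \<le> c}"
  using ws_closed_pre[of "{..c}" u] by simp

lemma ws_closed_Inter:
  assumes "\<And>i. i \<in> I \<Longrightarrow> closedin weakstar (T i)" "I \<noteq> {}"
  shows "closedin weakstar (\<Inter>i\<in>I. T i)"
  using assms by (intro closedin_Inter) auto

lemma ws_closure_dual: "weakstar closure_of S \<subseteq> dual"
  using closure_of_subset_topspace[of weakstar S] by simp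

lemma ws_closure_sub: "S \<subseteq> T \<Longrightarrow> closedin weakstar T \<Longrightarrow> weakstar closure_of S \<subseteq> T"
  by (rule closure_of_minimal)

lemma ws_subset_closure: "S \<subseteq> dual \<Longrightarrow> S \<subseteq> weakstar closure_of S"
  by (rule closure_of_subset) simp

definition fconvex :: "('a \<Rightarrow> real) set \<Rightarrow> bool" where
  "fconvex S \<longleftrightarrow> (\<forall>y1\<in>S. \<forall>y2\<in>S. \<forall>a b. 0 \<le> a \<and> 0 \<le> b \<and> a + b = 1 \<longrightarrow> (\<lambda>x. a * y1 x + b * y2 x) \<in> S)"

lemma ws_nbhd:
  assumes y0: "y0 \<in> dual" and ncl: "y0 \<notin> weakstar closure_of S"
  shows "\<exists>F \<epsilon>. finite F \<and> \<epsilon> > 0 \<and> (\<forall>s\<in>S. s \<in> dual \<longrightarrow> (\<exists>i\<in>F. \<epsilon> \<le> \<bar>s i - y0 i\<bar>))"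
proof -
  obtain T where T: "y0 \<in> T" "openin weakstar T" "\<And>y. y \<in> S \<Longrightarrow> y \<notin> T"
    using ncl y0 unfolding in_closure_of by auto
  then obtain O' where O': "openin (product_topology (\<lambda>_. euclideanreal) UNIV) O'" "T = O' \<inter> dual"
    unfolding weakstar_def openin_subtopology by blast
  have "y0 \<in> O'" using T O' by blast
  then obtain U where U: "finite {i. U i \<noteq> UNIV}" "\<And>i. open (U i)" "y0 \<in> Pi\<^sub>E UNIV U" "Pi\<^sub>E UNIV U \<subseteq> O'"
    using O'(1) unfolding openin_product_topology_alt by auto
  define F where "F = {i. U i \<noteq> UNIV}"
  have "\<forall>i. \<exists>e>0. ball (y0 i) e \<subseteq> U i"
  proof
    fix i have "y0 i \<in> U i" using U(3) by auto
    thus "\<exists>e>0. ball (y0 i) e \<subseteq> U i" using U(2)[of i] open_contains_ball by blast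
  qed
  then obtain e where e: "\<And>i. e i > 0" "\<And>i. ball (y0 i) (e i) \<subseteq> U i" by metis
  define \<epsilon> where "\<epsilon> = Min (insert 1 (e ` F))"
  have fin: "finite F" using U(1) unfolding F_def .
  have ep: "\<epsilon> > 0" unfolding \<epsilon>_def using fin e(1) by (subst Min_gr_iff) auto
  have epi: "\<epsilon> \<le> e i" if "i \<in> F" for i unfolding \<epsilon>_def using fin that by (intro Min_le) auto
  have "\<exists>i\<in>F. \<epsilon> \<le> \<bar>s i - y0 i\<bar>" if s: "s \<in> S" "s \<in> dual" for s
  proof (rule ccontr)
    assume "\<not> (\<exists>i\<in>F. \<epsilon> \<le> \<bar>s i - y0 i\<bar>)"
    hence lt: "\<And>i. i \<in> F \<Longrightarrow> \<bar>s i - y0 i\<bar> < \<epsilon>" by auto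
    have "s i \<in> U i" for i
    proof (cases "i \<in> F")
      case True
      hence "dist (y0 i) (s i) < e i" using lt[OF True] epi[OF True] by (simp add: dist_real_def abs_minus_commute)
      thus ?thesis using e(2)[of i] by auto
    next
      case False thus ?thesis unfolding F_def by simp
    qed
    hence "s \<in> Pi\<^sub>E UNIV U" by auto
    hence "s \<in> T" using U(4) O'(2) s by auto
    thus False using T(3) s by blast
  qed
  thus ?thesis using fin ep by blast
qed

theorem ws_sep:
  fixes S :: "('a::{real_vector,topological_space} \<Rightarrow> real) set"
  assumes Sd: "S \<subseteq> dual" and cv: "fconvex S" and ne: "S \<noteq> {}" and y0: "y0 \<in> dual"
    and ncl: "y0 \<notin> weakstar closure_of S"
  shows "\<exists>u \<gamma>. \<gamma> > 0 \<and> (\<forall>s\<in>S. s u \<le> y0 u - \<gamma>)"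
proof -
  obtain F \<epsilon> where F: "finite F" "\<epsilon> > 0" and far: "\<And>s. s \<in> S \<Longrightarrow> \<exists>i\<in>F. \<epsilon> \<le> \<bar>s i - y0 i\<bar>"
    using ws_nbhd[OF y0 ncl] Sd by blast
  obtain s0 where s0: "s0 \<in> S" using ne by blast
  define T :: "('a \<Rightarrow> real) \<Rightarrow> ('a \<Rightarrow> real)" where "T y = (\<lambda>i. if i \<in> F then y i else 0)" for y
  define B :: "('a \<Rightarrow> real) set" where "B = {w. \<forall>i\<in>F. \<bar>w i\<bar> < \<epsilon>}"
  define C where "C = {T s - T s0 + w | s w. s \<in> S \<and> w \<in> B}"
  have zB: "0 \<in> B" unfolding B_def using F by simp
  have BC: "B \<subseteq> C"
  proof
    fix w assume w: "w \<in> B"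
    have "w = T s0 - T s0 + w" by simp
    thus "w \<in> C" unfolding C_def using s0 w by blast
  qed
  have absB: "\<exists>t>0. t *\<^sub>R w \<in> B" for w
  proof -
    define M where "M = (\<Sum>i\<in>F. \<bar>w i\<bar>)"
    have M0: "M \<ge> 0" unfolding M_def by (simp add: sum_nonneg)
    define t where "t = \<epsilon> / (2 * (M + 1))"
    have tp: "t > 0" unfolding t_def using F(2) M0 by simp
    have "\<bar>(t *\<^sub>R w) i\<bar> < \<epsilon>" if i: "i \<in> F" for i
    proof -
      have wi: "\<bar>w i\<bar> \<le> M" unfolding M_def using F(1) i by (intro member_le_sum) auto
      have "\<bar>(t *\<^sub>R w) i\<bar> = t * \<bar>w i\<bar>" using tp by (simp add: abs_mult)
      also have "\<dots> \<le> t * M" using wi tp by (simp add: mult_left_mono)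
      also have "\<dots> < \<epsilon>"
      proof -
        have "t * M = \<epsilon> * (M / (2 * (M + 1)))" unfolding t_def by simp
        also have "\<dots> < \<epsilon> * 1"
        proof (rule mult_strict_left_mono)
          have pos: "0 < 2 * (M + 1)" using M0 by simp
          show "M / (2 * (M + 1)) < 1" unfolding pos_divide_less_eq[OF pos] using M0 by simp
        qed (use F(2) in simp)
        finally show ?thesis by simp
      qed
      finally show ?thesis .
    qed
    thus ?thesis using tp unfolding B_def by blast
  qed
  have cvB: "convex B"
    unfolding convex_def
  proof (intro ballI allI impI)
    fix p q :: "'a \<Rightarrow> real" and a b :: real
    assume p: "p \<in> B" and q: "q \<in> B" and ab: "0 \<le> a" "0 \<le> b" "a + b = 1"
    have "\<bar>a * p i + b * q i\<bar> < \<epsilon>" if i: "i \<in> F" for i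
    proof -
      have "\<bar>a * p i + b * q i\<bar> \<le> a * \<bar>p i\<bar> + b * \<bar>q i\<bar>"
        using ab abs_triangle_ineq[of "a * p i" "b * q i"] by (simp add: abs_mult)
      also have "\<dots> \<le> a * max \<bar>p i\<bar> \<bar>q i\<bar> + b * max \<bar>p i\<bar> \<bar>q i\<bar>" using ab by (intro add_mono mult_left_mono) auto
      also have "\<dots> = max \<bar>p i\<bar> \<bar>q i\<bar>" using ab by (simp add: distrib_right[symmetric])
      also have "\<dots> < \<epsilon>" using p q i unfolding B_def by simp
      finally show ?thesis .
    qed
    thus "a *\<^sub>R p + b *\<^sub>R q \<in> B" unfolding B_def by simp
  qed
  have Tlin: "T (\<lambda>x. a * y1 x + b * y2 x) = a *\<^sub>R T y1 + b *\<^sub>R T y2" for a b y1 y2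
    unfolding T_def by (auto simp: fun_eq_iff)
  have cvC: "convex C"
    unfolding convex_def
  proof (intro ballI allI impI)
    fix p q :: "'a \<Rightarrow> real" and a b :: real
    assume p: "p \<in> C" and q: "q \<in> C" and ab: "0 \<le> a" "0 \<le> b" "a + b = 1"
    obtain s1 w1 where 1: "p = T s1 - T s0 + w1" "s1 \<in> S" "w1 \<in> B" using p unfolding C_def by blast
    obtain s2 w2 where 2: "q = T s2 - T s0 + w2" "s2 \<in> S" "w2 \<in> B" using q unfolding C_def by blast
    have sS: "(\<lambda>x. a * s1 x + b * s2 x) \<in> S" using cv 1(2) 2(2) ab unfolding fconvex_def by blast
    have wB: "a *\<^sub>R w1 + b *\<^sub>R w2 \<in> B" using convexD[OF cvB 1(3) 2(3) ab] .
    have "a *\<^sub>R p + b *\<^sub>R q = T (\<lambda>x. a * s1 x + b * s2 x) - (a + b) *\<^sub>R T s0 + (a *\<^sub>R w1 + b *\<^sub>R w2)"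
      unfolding 1(1) 2(1) Tlin by (simp add: algebra_simps)
    hence "a *\<^sub>R p + b *\<^sub>R q = T (\<lambda>x. a * s1 x + b * s2 x) - T s0 + (a *\<^sub>R w1 + b *\<^sub>R w2)"
      using ab by simp
    thus "a *\<^sub>R p + b *\<^sub>R q \<in> C" unfolding C_def using sS wB by blast
  qed
  define z0 where "z0 = T y0 - T s0"
  have z0C: "z0 \<notin> C"
  proof
    assume "z0 \<in> C"
    then obtain s w where sw: "z0 = T s - T s0 + w" "s \<in> S" "w \<in> B" unfolding C_def by blast
    hence "w = T y0 - T s" unfolding z0_def by (simp add: algebra_simps)
    hence "\<forall>i\<in>F. \<bar>y0 i - s i\<bar> < \<epsilon>" using sw(3) unfolding B_def T_def by auto
    moreover obtain i where "i \<in> F" "\<epsilon> \<le> \<bar>s i - y0 i\<bar>" using far[OF sw(2)] by blast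
    ultimately show False by (auto simp: abs_minus_commute)
  qed
  obtain \<phi> :: "('a \<Rightarrow> real) \<Rightarrow> real" where phi: "linear \<phi>" "\<phi> z0 \<ge> 1" "\<forall>c\<in>C. \<phi> c \<le> 1"
    using sep_gauge[OF cvC BC[THEN subsetD, OF zB] _ z0C] absB BC by blast
  obtain t where t: "t > 0" "t *\<^sub>R z0 \<in> B" using absB by blast
  have gap: "\<phi> (T s) \<le> \<phi> (T y0) - t" if s: "s \<in> S" for s
  proof -
    have "T s - T s0 + t *\<^sub>R z0 \<in> C" unfolding C_def using s t by blast
    hence "\<phi> (T s - T s0 + t *\<^sub>R z0) \<le> 1" using phi(3) by blast
    hence "\<phi> (T s) - \<phi> (T s0) + t * \<phi> z0 \<le> 1"
      using linear_add[OF phi(1)] linear_diff[OF phi(1)] linear_scale[OF phi(1)] by simp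
    moreover have "\<phi> z0 = \<phi> (T y0) - \<phi> (T s0)" unfolding z0_def using linear_diff[OF phi(1)] by simp
    moreover have "t \<le> t * \<phi> z0" using phi(2) t(1) by simp
    ultimately show ?thesis using phi(2) by linarith
  qed
  define \<delta> :: "'a \<Rightarrow> 'a \<Rightarrow> real" where "\<delta> i = (\<lambda>j. if j = i then 1 else 0)" for i
  define u where "u = (\<Sum>i\<in>F. \<phi> (\<delta> i) *\<^sub>R i)"
  have Teq: "T y = (\<Sum>i\<in>F. y i *\<^sub>R \<delta> i)" for y
    unfolding T_def \<delta>_def by (auto simp: fun_eq_iff sum_fun_apply' F(1) if_distrib sum.delta cong: if_cong)
  have key: "y u = \<phi> (T y)" if y: "y \<in> dual" for y
  proof -
    have ly: "linear y" using y unfolding dual_def by blast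
    have "y u = (\<Sum>i\<in>F. \<phi> (\<delta> i) * y i)" unfolding u_def
      by (simp add: linear_sum[OF ly] linear_scale[OF ly])
    also have "\<dots> = \<phi> (T y)" unfolding Teq
      by (simp add: linear_sum[OF phi(1)] linear_scale[OF phi(1)] mult.commute)
    finally show ?thesis .
  qed
  have "\<forall>s\<in>S. s u \<le> y0 u - t"
  proof
    fix s assume s: "s \<in> S"
    have "s u = \<phi> (T s)" using key[of s] s Sd by blast
    also have "\<dots> \<le> \<phi> (T y0) - t" using gap[OF s] .
    also have "\<phi> (T y0) = y0 u" using key[OF y0] by simp
    finally show "s u \<le> y0 u - t" .
  qed
  thus ?thesis using t(1) by blast
qed

context
  fixes f :: "'a::{real_vector,topological_space} \<Rightarrow> ereal"
  assumes tvs: "tvs TYPE('a)" and lc: "locally_convex TYPE('a)" and f: "Gamma f"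
begin

lemma fin_point: "\<exists>x a. f x = ereal a"
proof -
  obtain x where "f x \<noteq> \<infinity>" using Gamma_proper[OF f] by blast
  then obtain a where a: "f x = ereal a" using Gamma_ninf[OF f, of x] by (cases "f x") auto
  thus ?thesis by blast
qed

lemma conj_upper: "ereal (y v) - f v \<le> conj f y"
  unfolding conj_def by (rule SUP_upper) simp

lemma conj_finite:
  assumes "y \<in> domconj f"
  shows "\<exists>\<gamma>. conj f y = ereal \<gamma>"
proof -
  obtain x a where a: "f x = ereal a" using fin_point by blast
  have "ereal (y x) - f x \<le> conj f y" by (rule conj_upper)
  hence "conj f y \<noteq> -\<infinity>" using a by auto
  moreover have "conj f y \<noteq> \<infinity>" using assms unfolding domconj_def by auto
  ultimately show ?thesis by (cases "conj f y") auto
qed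

lemma conj_minor:
  assumes "conj f y = ereal \<gamma>"
  shows "ereal (y v - \<gamma>) \<le> f v"
proof -
  have "ereal (y v) - f v \<le> ereal \<gamma>" using conj_upper[of y v] assms by simp
  thus ?thesis using Gamma_ninf[OF f, of v] by (cases "f v") auto
qed

lemma minor_dom:
  assumes y: "y \<in> dual" and m: "\<And>x. ereal (y x - c) \<le> f x"
  shows "y \<in> domconj f"
proof -
  have "ereal (y x) - f x \<le> ereal c" for x
    using m[of x] Gamma_ninf[OF f, of x] by (cases "f x") auto
  hence "conj f y \<le> ereal c" unfolding conj_def by (intro SUP_least) auto
  thus ?thesis unfolding domconj_def using y by auto
qed

lemma domconj_ne: "domconj f \<noteq> {}"
proof -
  obtain x a where a: "f x = ereal a" using fin_point by blast
  have "ereal (a - 1) < f x" using a by simp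
  then obtain y c where "y \<in> dual" "\<And>x. ereal (y x - c) \<le> f x"
    using fm_minorant[OF tvs lc f] by blast
  thus ?thesis using minor_dom by blast
qed

lemma domconj_le_rec:
  assumes y: "y \<in> domconj f"
  shows "ereal (y u) \<le> rec f u"
proof (cases "rec f u")
  case PInf thus ?thesis by simp
next
  case MInf thus ?thesis using rec_ninf[OF tvs f] by simp
next
  case (real \<alpha>)
  obtain \<gamma> where g: "conj f y = ereal \<gamma>" using conj_finite[OF y] by blast
  obtain x0 b0 where b0: "f x0 = ereal b0" using fin_point by blast
  have ly: "linear y" using y unfolding domconj_def dual_def by blast
  have bnd: "t * (y u - \<alpha>) \<le> b0 - y x0 + \<gamma>" if t: "t > 0" for t
  proof -
    have "f (x0 + t *\<^sub>R u) \<le> ereal (b0 + t * \<alpha>)" by (rule rec_bound[OF tvs f b0 t real])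
    moreover have "ereal (y (x0 + t *\<^sub>R u) - \<gamma>) \<le> f (x0 + t *\<^sub>R u)" by (rule conj_minor[OF g])
    ultimately have "y (x0 + t *\<^sub>R u) - \<gamma> \<le> b0 + t * \<alpha>" by (metis ereal_less_eq(3) order_trans)
    moreover have "y (x0 + t *\<^sub>R u) = y x0 + t * y u" using linear_add[OF ly] linear_scale[OF ly] by simp
    ultimately show ?thesis by (simp add: algebra_simps)
  qed
  show ?thesis
  proof (rule ccontr)
    assume "\<not> ereal (y u) \<le> rec f u"
    hence pos: "y u - \<alpha> > 0" using real by simp
    define t where "t = (\<bar>b0 - y x0 + \<gamma>\<bar> + 1) / (y u - \<alpha>)"
    have tp: "t > 0" unfolding t_def using pos by (simp add: add_nonneg_pos)
    have "t * (y u - \<alpha>) = \<bar>b0 - y x0 + \<gamma>\<bar> + 1" unfolding t_def using pos by simp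
    thus False using bnd[OF tp] by simp
  qed
qed

lemma closure_le_rec:
  assumes y: "y \<in> weakstar closure_of domconj f"
  shows "ereal (y u) \<le> rec f u"
proof (cases "rec f u")
  case PInf thus ?thesis by simp
next
  case MInf thus ?thesis using rec_ninf[OF tvs f] by simp
next
  case (real \<alpha>)
  have "domconj f \<subseteq> {y \<in> dual. y u \<le> \<alpha>}"
    using domconj_le_rec[of _ u] real unfolding domconj_def by auto
  hence "weakstar closure_of domconj f \<subseteq> {y \<in> dual. y u \<le> \<alpha>}"
    by (rule ws_closure_sub[OF _ ws_closed_le])
  thus ?thesis using y real by auto
qed

lemma rec_le_sigma:
  assumes h: "\<And>y. y \<in> domconj f \<Longrightarrow> y u \<le> c"
  shows "rec f u \<le> ereal c"
proof -
  obtain x0 b0 where b0: "f x0 = ereal b0" using fin_point by blast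
  have "f (x0 + t *\<^sub>R u) \<le> ereal (b0 + t * c)" if t: "t > 0" for t
  proof (rule ccontr)
    assume "\<not> f (x0 + t *\<^sub>R u) \<le> ereal (b0 + t * c)"
    hence "ereal (b0 + t * c) < f (x0 + t *\<^sub>R u)" by simp
    then obtain y c' where y: "y \<in> dual" "\<And>x. ereal (y x - c') \<le> f x" "b0 + t * c < y (x0 + t *\<^sub>R u) - c'"
      using fm_minorant[OF tvs lc f] by blast
    have yd: "y \<in> domconj f" using minor_dom[OF y(1,2)] .
    have "y u \<le> c" using h[OF yd] .
    moreover have "y x0 - c' \<le> b0" using y(2)[of x0] b0 by simp
    moreover have "y (x0 + t *\<^sub>R u) = y x0 + t * y u"
      using linear_add[OF dual_linear[OF y(1)]] linear_scale[OF dual_linear[OF y(1)]] by simp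
    moreover have "t * y u \<le> t * c" using \<open>y u \<le> c\<close> t by (simp add: mult_left_mono)
    ultimately have "y (x0 + t *\<^sub>R u) - c' \<le> b0 + t * c" by linarith
    thus False using y(3) by simp
  qed
  thus ?thesis using rec_le_iff[OF tvs f b0] by blast
qed

lemma domconj_conv: "fconvex (domconj f)"
  unfolding fconvex_def
proof (intro ballI allI impI)
  fix y1 y2 and a b :: real
  assume y1: "y1 \<in> domconj f" and y2: "y2 \<in> domconj f" and ab: "0 \<le> a \<and> 0 \<le> b \<and> a + b = 1"
  obtain c1 where c1: "conj f y1 = ereal c1" using conj_finite[OF y1] by blast
  obtain c2 where c2: "conj f y2 = ereal c2" using conj_finite[OF y2] by blast
  have d: "(\<lambda>x. a * y1 x + b * y2 x) \<in> dual"
    using y1 y2 unfolding domconj_def by (auto intro!: dual_add dual_scale)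
  have "ereal (a * y1 x + b * y2 x - (a * c1 + b * c2)) \<le> f x" for x
  proof (cases "f x")
    case (real r)
    have "y1 x - c1 \<le> r" using conj_minor[OF c1, of x] real by simp
    moreover have "y2 x - c2 \<le> r" using conj_minor[OF c2, of x] real by simp
    ultimately have "a * (y1 x - c1) + b * (y2 x - c2) \<le> a * r + b * r"
      using ab by (intro add_mono mult_left_mono) auto
    also have "a * r + b * r = r" using ab by (simp add: distrib_right[symmetric])
    finally show ?thesis using real by (simp add: algebra_simps)
  qed (use Gamma_ninf[OF f] in auto)
  thus "(\<lambda>x. a * y1 x + b * y2 x) \<in> domconj f" using minor_dom[OF d] by blast
qed

lemma Bchar: "weakstar closure_of domconj f = {y \<in> dual. \<forall>u. ereal (y u) \<le> rec f u}"
proof (intro set_eqI iffI)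
  fix y assume "y \<in> weakstar closure_of domconj f"
  thus "y \<in> {y \<in> dual. \<forall>u. ereal (y u) \<le> rec f u}"
    using closure_le_rec ws_closure_dual by blast
next
  fix y assume y: "y \<in> {y \<in> dual. \<forall>u. ereal (y u) \<le> rec f u}"
  show "y \<in> weakstar closure_of domconj f"
  proof (rule ccontr)
    assume ncl: "y \<notin> weakstar closure_of domconj f"
    have sub: "domconj f \<subseteq> dual" unfolding domconj_def by auto
    obtain u \<gamma> where g: "\<gamma> > 0" "\<And>s. s \<in> domconj f \<Longrightarrow> s u \<le> y u - \<gamma>"
      using ws_sep[OF sub domconj_conv domconj_ne _ ncl] y by blast
    have "rec f u \<le> ereal (y u - \<gamma>)" using rec_le_sigma[where u=u and c="y u - \<gamma>"] g(2) by blast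
    moreover have "ereal (y u) \<le> rec f u" using y by blast
    ultimately show False using g(1) by (metis ereal_less_eq(3) diff_le_0_iff_le le_less_trans less_eq_ereal_def not_le order_trans diff_less_eq less_add_same_cancel1)
  qed
qed

end

lemma ereal_diff_le_iff: "x \<noteq> -\<infinity> \<Longrightarrow> x - ereal c \<le> ereal a \<longleftrightarrow> x \<le> ereal (a + c)"
  by (cases x) auto

lemma ereal_diff_ge0_iff: "ereal c \<le> x \<longleftrightarrow> 0 \<le> x - ereal c"
  by (cases x) auto

lemma ereal_diff_le0_iff: "x - ereal c \<le> 0 \<longleftrightarrow> x \<le> ereal c"
  by (cases x) auto

lemma ereal_diff_eq0_iff: "x - ereal c = 0 \<longleftrightarrow> x = ereal c"
  by (cases x) auto

locale P14 =
  fixes f :: "'a::{real_vector,t2_space} \<Rightarrow> ereal" and xs :: "'a \<Rightarrow> real" and L :: "'a set"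
  assumes tvs: "tvs TYPE('a)" and lc: "locally_convex TYPE('a)" and f: "Gamma f"
    and xs: "xs \<in> dual"
    and L_def: "L = {u. rec f u = ereal (xs u) \<and> rec f (- u) = ereal (- xs u)}"
begin

lemma xs_lin: "linear xs" using xs unfolding dual_def by blast
lemma xs_cont: "continuous_on UNIV xs" using xs unfolding dual_def by blast
lemma xs_neg: "xs (- u) = - xs u" using linear_neg[OF xs_lin] .
lemma xs_add: "xs (u + v) = xs u + xs v" using linear_add[OF xs_lin] .
lemma xs_diff: "xs (u - v) = xs u - xs v" using linear_diff[OF xs_lin] .
lemma xs_zero: "xs 0 = 0" using linear_0[OF xs_lin] .
lemma xs_scale: "xs (c *\<^sub>R u) = c * xs u" using linear_scale[OF xs_lin] by simp

lemma memL: "u \<in> L \<longleftrightarrow> rec f u \<le> ereal (xs u) \<and> rec f (- u) \<le> ereal (- xs u)"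
proof
  assume "u \<in> L" thus "rec f u \<le> ereal (xs u) \<and> rec f (- u) \<le> ereal (- xs u)" unfolding L_def by simp
next
  assume a: "rec f u \<le> ereal (xs u) \<and> rec f (- u) \<le> ereal (- xs u)"
  have s: "0 \<le> rec f u + rec f (- u)" by (rule rec_neg_sum[OF tvs f])
  obtain p where p: "rec f u = ereal p" using a rec_ninf[OF tvs f, of u] by (cases "rec f u") auto
  obtain q where q: "rec f (-u) = ereal q" using a rec_ninf[OF tvs f, of "-u"] by (cases "rec f (-u)") auto
  have "p \<le> xs u" "q \<le> - xs u" "0 \<le> p + q" using a s p q by auto
  hence "p = xs u" "q = - xs u" by auto
  thus "u \<in> L" unfolding L_def using p q by simp
qed

lemma L_neg: "u \<in> L \<Longrightarrow> - u \<in> L" unfolding L_def by (simp add: xs_neg)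

lemma L_sub: "subspace L"
  unfolding subspace_def
proof (intro conjI ballI allI)
  show "0 \<in> L" unfolding L_def using rec_zero[OF tvs f] by (simp add: zero_ereal_def xs_zero)
next
  fix u v assume u: "u \<in> L" and v: "v \<in> L"
  have "rec f (u + v) \<le> rec f u + rec f v" by (rule rec_subadd[OF tvs f])
  also have "\<dots> = ereal (xs (u + v))" using u v unfolding L_def by (simp add: xs_add)
  finally have 1: "rec f (u + v) \<le> ereal (xs (u + v))" .
  have "rec f (- (u + v)) = rec f (- u + - v)" by (simp add: algebra_simps)
  also have "\<dots> \<le> rec f (- u) + rec f (- v)" by (rule rec_subadd[OF tvs f])
  also have "\<dots> = ereal (- xs (u + v))" using u v unfolding L_def by (simp add: xs_add)
  finally have 2: "rec f (- (u + v)) \<le> ereal (- xs (u + v))" .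
  show "u + v \<in> L" using 1 2 memL by blast
next
  fix c :: real and u assume u: "u \<in> L"
  show "c *\<^sub>R u \<in> L"
  proof (cases c "0::real" rule: linorder_cases)
    case equal thus ?thesis unfolding L_def using rec_zero[OF tvs f] by (simp add: zero_ereal_def xs_zero)
  next
    case greater
    have "rec f (c *\<^sub>R u) = ereal (xs (c *\<^sub>R u))"
      using rec_hom[OF tvs f greater, of u] u unfolding L_def by (simp add: xs_scale)
    moreover have "rec f (- (c *\<^sub>R u)) = ereal (- xs (c *\<^sub>R u))"
      using rec_hom[OF tvs f greater, of "-u"] u unfolding L_def by (simp add: xs_scale)
    ultimately show ?thesis unfolding L_def by simp
  next
    case less
    hence g: "-c > 0" by simp
    have "rec f (c *\<^sub>R u) = rec f ((-c) *\<^sub>R (-u))" by simp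
    also have "\<dots> = ereal (-c) * rec f (-u)" by (rule rec_hom[OF tvs f g])
    also have "\<dots> = ereal (xs (c *\<^sub>R u))" using u unfolding L_def by (simp add: xs_scale)
    finally have 1: "rec f (c *\<^sub>R u) = ereal (xs (c *\<^sub>R u))" .
    have "rec f (- (c *\<^sub>R u)) = rec f ((-c) *\<^sub>R u)" by simp
    also have "\<dots> = ereal (-c) * rec f u" by (rule rec_hom[OF tvs f g])
    also have "\<dots> = ereal (- xs (c *\<^sub>R u))" using u unfolding L_def by (simp add: xs_scale)
    finally have 2: "rec f (- (c *\<^sub>R u)) = ereal (- xs (c *\<^sub>R u))" .
    show ?thesis unfolding L_def using 1 2 by simp
  qed
qed

lemma L_add: "u \<in> L \<Longrightarrow> v \<in> L \<Longrightarrow> u + v \<in> L" using L_sub unfolding subspace_def by blast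
lemma L_scale: "u \<in> L \<Longrightarrow> c *\<^sub>R u \<in> L" using L_sub unfolding subspace_def by blast
lemma L_zero: "0 \<in> L" using L_sub unfolding subspace_def by blast
lemma L_diff: "u \<in> L \<Longrightarrow> v \<in> L \<Longrightarrow> u - v \<in> L" using L_add[of u "-v"] L_neg by simp

lemma L_closed: "closed L"
proof -
  have c1: "closed {u. rec f u \<le> ereal (xs u)}" by (rule rec_closed[OF tvs f xs_cont])
  have negc: "continuous_on UNIV (\<lambda>x::'a. 0 + (-1) *\<^sub>R x)" by (rule tvs_affine[OF tvs])
  have c2: "closed ((\<lambda>x::'a. 0 + (-1) *\<^sub>R x) -` {u. rec f u \<le> ereal (xs u)})"
    by (rule closed_vimage[OF c1 negc])
  have "L = {u. rec f u \<le> ereal (xs u)} \<inter> ((\<lambda>x::'a. 0 + (-1) *\<^sub>R x) -` {u. rec f u \<le> ereal (xs u)})"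
    using memL by (auto simp: xs_neg)
  thus ?thesis using c1 c2 by (simp add: closed_Int)
qed

lemma inv_fin:
  assumes l: "l \<in> L" and fx: "f x = ereal a"
  shows "f (x + l) = ereal (a + xs l)"
proof -
  have rl: "rec f l = ereal (xs l)" using l unfolding L_def by simp
  have rnl: "rec f (-l) = ereal (- xs l)" using l unfolding L_def by simp
  have le1: "f (x + l) \<le> ereal (a + xs l)" using rec_bound[OF tvs f fx _ rl, of 1] by simp
  then obtain b where b: "f (x + l) = ereal b" using Gamma_ninf[OF f, of "x + l"] by (cases "f (x + l)") auto
  have "f ((x + l) + 1 *\<^sub>R (-l)) \<le> ereal (b + 1 * (- xs l))" by (rule rec_bound[OF tvs f b _ rnl]) simp
  hence "a \<le> b - xs l" using fx by simp
  moreover have "b \<le> a + xs l" using le1 b by simp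
  ultimately show ?thesis using b by simp
qed

lemma inv:
  assumes l: "l \<in> L"
  shows "f (x + l) = f x + ereal (xs l)"
proof (cases "f x")
  case (real a) thus ?thesis using inv_fin[OF l real] by simp
next
  case MInf thus ?thesis using Gamma_ninf[OF f] by simp
next
  case PInf
  show ?thesis
  proof (cases "f (x + l)")
    case (real b)
    have "f ((x + l) + (-l)) = ereal (b + xs (-l))" by (rule inv_fin[OF L_neg[OF l] real])
    thus ?thesis using PInf by simp
  next
    case PInf thus ?thesis using \<open>f x = \<infinity>\<close> by simp
  next
    case MInf thus ?thesis using Gamma_ninf[OF f] by simp
  qed
qed

lemma inv_h: "l \<in> L \<Longrightarrow> f (x + l) - ereal (xs (x + l)) = f x - ereal (xs x)"
  using inv[of l x] Gamma_ninf[OF f, of x] by (cases "f x") (auto simp: xs_add)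

lemma x_in_proj: "x \<in> proj L x"
  unfolding proj_def using L_zero by force

lemma rep_proj: "\<exists>l\<in>L. rep (proj L x) = x + l"
proof -
  have "rep (proj L x) \<in> proj L x" unfolding rep_def using x_in_proj by (metis someI)
  thus ?thesis unfolding proj_def by blast
qed

lemma proj_eq: "proj L x = proj L y \<longleftrightarrow> x - y \<in> L"
proof
  assume "proj L x = proj L y"
  hence "y \<in> proj L x" using x_in_proj by simp
  then obtain l where "l \<in> L" "y = x + l" unfolding proj_def by blast
  thus "x - y \<in> L" using L_neg by simp
next
  assume d: "x - y \<in> L"
  show "proj L x = proj L y"
  proof (intro set_eqI iffI)
    fix z assume "z \<in> proj L x"
    then obtain l where l: "l \<in> L" "z = x + l" unfolding proj_def by blast
    hence "z = y + ((x - y) + l)" by simp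
    moreover have "(x - y) + l \<in> L" using L_add d l by blast
    ultimately show "z \<in> proj L y" unfolding proj_def by blast
  next
    fix z assume "z \<in> proj L y"
    then obtain l where l: "l \<in> L" "z = y + l" unfolding proj_def by blast
    hence "z = x + (l - (x - y))" by simp
    moreover have "l - (x - y) \<in> L" using L_diff d l by blast
    ultimately show "z \<in> proj L x" unfolding proj_def by blast
  qed
qed

lemma proj_eqI: "l \<in> L \<Longrightarrow> proj L (x + l) = proj L x"
  using proj_eq by simp

lemma rep_proj': "proj L (rep (proj L x)) = proj L x"
  using rep_proj[of x] proj_eqI by auto

lemma qscale_proj: "qscale L t (proj L x) = proj L (t *\<^sub>R x)"
proof -
  obtain l where l: "l \<in> L" "rep (proj L x) = x + l" using rep_proj by blast
  have "qscale L t (proj L x) = proj L (t *\<^sub>R x + t *\<^sub>R l)" unfolding qscale_def l(2) by (simp add: scaleR_add_right)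
  also have "\<dots> = proj L (t *\<^sub>R x)" by (rule proj_eqI[OF L_scale[OF l(1)]])
  finally show ?thesis .
qed

lemma qadd_proj: "qadd L (proj L x) (proj L y) = proj L (x + y)"
proof -
  obtain l1 where l1: "l1 \<in> L" "rep (proj L x) = x + l1" using rep_proj by blast
  obtain l2 where l2: "l2 \<in> L" "rep (proj L y) = y + l2" using rep_proj by blast
  have "qadd L (proj L x) (proj L y) = proj L ((x + y) + (l1 + l2))" unfolding qadd_def l1(2) l2(2)
    by (simp add: algebra_simps)
  also have "\<dots> = proj L (x + y)" by (rule proj_eqI[OF L_add[OF l1(1) l2(1)]])
  finally show ?thesis .
qed

lemma hval: "hq f xs L (proj L x) = f x - ereal (xs x)"
proof -
  obtain l where l: "l \<in> L" "rep (proj L x) = x + l" using rep_proj by blast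
  show ?thesis unfolding hq_def l(2) by (rule inv_h[OF l(1)])
qed

lemma cosets_proj: "A \<in> cosets L \<Longrightarrow> \<exists>x. A = proj L x" unfolding cosets_def by blast
lemma proj_cosets: "proj L x \<in> cosets L" unfolding cosets_def by blast

lemma f_decomp: "f x = hq f xs L (proj L x) + ereal (xs x)"
  unfolding hval using Gamma_ninf[OF f, of x] by (cases "f x") auto


lemma topspace_qtop: "topspace (qtop L) = cosets L"
proof -
  have "proj L -` range (proj L) = UNIV" by auto
  hence "openin (qtop L) (cosets L)" unfolding openin_qtop cosets_def by simp
  moreover have "\<And>S. openin (qtop L) S \<Longrightarrow> S \<subseteq> cosets L" unfolding openin_qtop by blast
  ultimately show ?thesis unfolding topspace_def by blast
qed

lemma h_closed: "closedin (qtop L) {A \<in> cosets L. hq f xs L A \<le> ereal a}"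
proof -
  have eq: "proj L -` (cosets L - {A \<in> cosets L. hq f xs L A \<le> ereal a}) = - {x. f x \<le> ereal (a + xs x)}"
    using hval ereal_diff_le_iff[OF Gamma_ninf[OF f]] proj_cosets by auto
  have "closed {x. f (id x) \<le> ereal (a + xs x)}"
    by (rule closed_le_comp[OF f]) (auto intro!: continuous_intros xs_cont)
  hence "open (proj L -` (cosets L - {A \<in> cosets L. hq f xs L A \<le> ereal a}))" unfolding eq by auto
  hence "openin (qtop L) (cosets L - {A \<in> cosets L. hq f xs L A \<le> ereal a})" unfolding openin_qtop by blast
  thus ?thesis unfolding closedin_def topspace_qtop by blast
qed

lemma h_Gamma: "GammaF (qtop L) (qadd L) (qscale L) (cosets L) (hq f xs L)"
  unfolding GammaF_def
proof (intro conjI ballI allI impI)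
  fix A assume "A \<in> cosets L"
  then obtain x where x: "A = proj L x" using cosets_proj by blast
  show "hq f xs L A \<noteq> -\<infinity>" unfolding x hval using Gamma_ninf[OF f, of x] by (cases "f x") auto
next
  obtain x a where a: "f x = ereal a" using fin_point[OF tvs lc f] by blast
  have "hq f xs L (proj L x) \<noteq> \<infinity>" unfolding hval using a by simp
  thus "\<exists>A\<in>cosets L. hq f xs L A \<noteq> \<infinity>" using proj_cosets by blast
next
  fix a show "closedin (qtop L) {A \<in> cosets L. hq f xs L A \<le> ereal a}" by (rule h_closed)
next
  fix A B and t :: real assume A: "A \<in> cosets L" and B: "B \<in> cosets L" and t: "0 < t \<and> t < 1"
  obtain x where x: "A = proj L x" using cosets_proj A by blast
  obtain y where y: "B = proj L y" using cosets_proj B by blast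
  have e: "qadd L (qscale L t (proj L x)) (qscale L (1 - t) (proj L y)) = proj L (t *\<^sub>R x + (1 - t) *\<^sub>R y)"
    unfolding qscale_proj qadd_proj ..
  have cv: "f (t *\<^sub>R x + (1 - t) *\<^sub>R y) \<le> ereal t * f x + ereal (1 - t) * f y"
    using Gamma_conv[OF f, of t x y] t by simp
  have main: "f (t *\<^sub>R x + (1 - t) *\<^sub>R y) - ereal (xs (t *\<^sub>R x + (1 - t) *\<^sub>R y))
          \<le> ereal t * (f x - ereal (xs x)) + ereal (1 - t) * (f y - ereal (xs y))"
  proof (cases "f x = \<infinity> \<or> f y = \<infinity>")
    case True
    have eqinf: "ereal t * (f x - ereal (xs x)) + ereal (1 - t) * (f y - ereal (xs y)) = \<infinity>"
      using True t Gamma_ninf[OF f, of x] Gamma_ninf[OF f, of y] by (cases "f x"; cases "f y") auto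
    show ?thesis by (simp only: eqinf) simp
  next
    case False
    then obtain a b where ab: "f x = ereal a" "f y = ereal b"
      using Gamma_ninf[OF f, of x] Gamma_ninf[OF f, of y] by (cases "f x"; cases "f y") auto
    have "f (t *\<^sub>R x + (1 - t) *\<^sub>R y) \<le> ereal (t * a + (1 - t) * b)" using cv ab by simp
    moreover have "xs (t *\<^sub>R x + (1 - t) *\<^sub>R y) = t * xs x + (1 - t) * xs y" by (simp add: xs_add xs_scale)
    ultimately have "f (t *\<^sub>R x + (1 - t) *\<^sub>R y) - ereal (xs (t *\<^sub>R x + (1 - t) *\<^sub>R y))
        \<le> ereal (t * (a - xs x) + (1 - t) * (b - xs y))"
      using ereal_diff_le_iff[OF Gamma_ninf[OF f]] by (simp add: algebra_simps)
    thus "f (t *\<^sub>R x + (1 - t) *\<^sub>R y) - ereal (xs (t *\<^sub>R x + (1 - t) *\<^sub>R y))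
          \<le> ereal t * (f x - ereal (xs x)) + ereal (1 - t) * (f y - ereal (xs y))" using ab by simp
  qed
  show "hq f xs L (qadd L (qscale L t A) (qscale L (1 - t) B)) \<le> ereal t * hq f xs L A + ereal (1 - t) * hq f xs L B"
    unfolding x y e hval by (rule main)
qed

lemma h_rec: "recc (qadd L) (qscale L) (cosets L) (hq f xs L) (proj L u) = rec f u - ereal (xs u)"
proof -
  define A0 where "A0 = (SOME v. v \<in> cosets L \<and> \<bar>hq f xs L v\<bar> \<noteq> \<infinity>)"
  obtain x a where a: "f x = ereal a" using fin_point[OF tvs lc f] by blast
  have "proj L x \<in> cosets L \<and> \<bar>hq f xs L (proj L x)\<bar> \<noteq> \<infinity>" using a proj_cosets hval by simp
  hence "A0 \<in> cosets L \<and> \<bar>hq f xs L A0\<bar> \<noteq> \<infinity>" unfolding A0_def by (rule someI)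
  then obtain w where w: "A0 = proj L w" "\<bar>f w - ereal (xs w)\<bar> \<noteq> \<infinity>" using cosets_proj hval by metis
  then obtain b where b: "f w = ereal b" using Gamma_ninf[OF f, of w] by (cases "f w") auto
  define g where "g t = (hq f xs L (qadd L A0 (qscale L t (proj L u))) - hq f xs L A0) / ereal t" for t
  have geq: "g t = dq f w u t - ereal (xs u)" if t: "t > 0" for t
  proof -
    have "g t = ((f (w + t *\<^sub>R u) - ereal (xs w + t * xs u)) - ereal (b - xs w)) / ereal t"
      unfolding g_def w(1) qscale_proj qadd_proj hval b by (simp add: xs_add xs_scale)
    also have "\<dots> = dq f w u t - ereal (xs u)"
      unfolding dq_def b using t by (cases "f (w + t *\<^sub>R u)") (auto simp: field_simps)
    finally show ?thesis .
  qed
  have "recc (qadd L) (qscale L) (cosets L) (hq f xs L) (proj L u) = Lim at_top g"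
    unfolding recc_def Let_def g_def A0_def ..
  also have "\<dots> = (SUP t\<in>{0<..}. g t)"
  proof (rule mono_Lim)
    fix s t :: real assume st: "0 < s" "s \<le> t"
    have "dq f w u s \<le> dq f w u t" by (rule dq_mono[OF f b st])
    hence "dq f w u s - ereal (xs u) \<le> dq f w u t - ereal (xs u)" by (rule ereal_minus_mono) simp
    thus "g s \<le> g t" using geq st by simp
  qed
  also have "\<dots> = (SUP t\<in>{0<..}. dq f w u t - ereal (xs u))" using geq by (intro SUP_cong) auto
  also have "\<dots> = (SUP t\<in>{0<..}. dq f w u t) - ereal (xs u)" by (rule SUP_ereal_minus_left) auto
  also have "\<dots> = rec f u - ereal (xs u)" using rec_Rf[OF tvs f b, of u] unfolding Rf_def by simp
  finally show ?thesis .
qed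

lemma h_image: "hq f xs L ` cosets L = range (\<lambda>x. f x - ereal (xs x))"
  unfolding cosets_def by (auto simp: hval image_iff)

lemma h_Inf: "Inf (hq f xs L ` cosets L) = - conj f xs"
proof -
  have "Inf (hq f xs L ` cosets L) = (INF x. f x - ereal (xs x))" unfolding h_image ..
  also have "\<dots> = (INF x. - (ereal (xs x) - f x))"
    by (intro INF_cong refl) (use Gamma_ninf[OF f] in \<open>case_tac "f x", auto\<close>)
  also have "\<dots> = - conj f xs" unfolding conj_def by (rule ereal_INF_uminus_eq)
  finally show ?thesis .
qed

lemma h_bdd: "(\<exists>m::real. \<forall>A\<in>cosets L. ereal m \<le> hq f xs L A) \<longleftrightarrow> xs \<in> domconj f"
proof -
  have "(\<forall>A\<in>cosets L. ereal m \<le> hq f xs L A) \<longleftrightarrow> ereal m \<le> - conj f xs" for m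
    unfolding h_Inf[symmetric] by (simp add: le_Inf_iff)
  moreover have "(\<exists>m::real. ereal m \<le> - conj f xs) \<longleftrightarrow> conj f xs < \<infinity>"
    by (cases "conj f xs") auto
  ultimately show ?thesis unfolding domconj_def using xs by auto
qed

lemma h_attain: "(\<exists>A\<in>cosets L. hq f xs L A = Inf (hq f xs L ` cosets L)) \<longleftrightarrow> xs \<in> Im_subdiff f"
proof
  assume "\<exists>A\<in>cosets L. hq f xs L A = Inf (hq f xs L ` cosets L)"
  then obtain x where x: "f x - ereal (xs x) = Inf (range (\<lambda>x. f x - ereal (xs x)))"
    using cosets_proj hval h_image by metis
  have le: "f x - ereal (xs x) \<le> f v - ereal (xs v)" for v
    unfolding x by (rule Inf_lower) simp
  obtain z c where c: "f z = ereal c" using fin_point[OF tvs lc f] by blast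
  have "f x \<noteq> \<infinity>"
  proof
    assume "f x = \<infinity>" thus False using le[of z] c by simp
  qed
  then obtain a where a: "f x = ereal a" using Gamma_ninf[OF f, of x] by (cases "f x") auto
  have "\<forall>v'. ereal (xs (v' - x)) \<le> f v' - f x"
  proof
    fix v' show "ereal (xs (v' - x)) \<le> f v' - f x"
      using le[of v'] a Gamma_ninf[OF f, of v'] by (cases "f v'") (auto simp: xs_diff)
  qed
  hence "xs \<in> subdiff f x" unfolding subdiff_def using a xs by simp
  thus "xs \<in> Im_subdiff f" unfolding Im_subdiff_def by blast
next
  assume "xs \<in> Im_subdiff f"
  then obtain x where x: "xs \<in> subdiff f x" unfolding Im_subdiff_def by blast
  hence fin: "\<bar>f x\<bar> \<noteq> \<infinity>" and sd: "\<And>v'. ereal (xs (v' - x)) \<le> f v' - f x"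
    unfolding subdiff_def by (auto split: if_splits)
  obtain a where a: "f x = ereal a" using fin by (cases "f x") auto
  have le: "f x - ereal (xs x) \<le> f v - ereal (xs v)" for v
    using sd[of v] a Gamma_ninf[OF f, of v] by (cases "f v") (auto simp: xs_diff)
  have "hq f xs L (proj L x) = Inf (hq f xs L ` cosets L)"
    unfolding h_image hval by (rule antisym) (auto intro!: Inf_greatest Inf_lower simp: le)
  thus "\<exists>A\<in>cosets L. hq f xs L A = Inf (hq f xs L ` cosets L)" using proj_cosets by blast
qed


lemma h_rec0_set:
  "{proj L u | u. recc (qadd L) (qscale L) (cosets L) (hq f xs L) (proj L u) = 0
                \<and> recc (qadd L) (qscale L) (cosets L) (hq f xs L) (proj L (- u)) = 0} = {proj L 0}"
proof -
  have iff: "(recc (qadd L) (qscale L) (cosets L) (hq f xs L) (proj L u) = 0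
                \<and> recc (qadd L) (qscale L) (cosets L) (hq f xs L) (proj L (- u)) = 0) \<longleftrightarrow> u \<in> L" for u
    unfolding h_rec ereal_diff_eq0_iff by (simp add: L_def xs_neg)
  show ?thesis
  proof (intro set_eqI iffI)
    fix A assume "A \<in> {proj L u | u. recc (qadd L) (qscale L) (cosets L) (hq f xs L) (proj L u) = 0
                \<and> recc (qadd L) (qscale L) (cosets L) (hq f xs L) (proj L (- u)) = 0}"
    then obtain u where "A = proj L u" "u \<in> L" using iff by blast
    thus "A \<in> {proj L 0}" using proj_eq by simp
  next
    fix A assume "A \<in> {proj L 0}"
    hence "A = proj L 0" by simp
    moreover have "(0::'a) \<in> L" by (rule L_zero)
    ultimately show "A \<in> {proj L u | u. recc (qadd L) (qscale L) (cosets L) (hq f xs L) (proj L u) = 0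
                \<and> recc (qadd L) (qscale L) (cosets L) (hq f xs L) (proj L (- u)) = 0}"
      using iff[of 0] by blast
  qed
qed

lemma part_b:
  "(\<forall>A\<in>cosets L. recc (qadd L) (qscale L) (cosets L) (hq f xs L) A \<ge> 0)
     \<longleftrightarrow> xs \<in> weakstar closure_of domconj f"
proof -
  have "(\<forall>A\<in>cosets L. recc (qadd L) (qscale L) (cosets L) (hq f xs L) A \<ge> 0) \<longleftrightarrow>
        (\<forall>u. recc (qadd L) (qscale L) (cosets L) (hq f xs L) (proj L u) \<ge> 0)"
    unfolding cosets_def by blast
  also have "\<dots> \<longleftrightarrow> (\<forall>u. ereal (xs u) \<le> rec f u)"
    unfolding h_rec ereal_diff_ge0_iff[symmetric] ..
  also have "\<dots> \<longleftrightarrow> xs \<in> weakstar closure_of domconj f"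
    unfolding Bchar[OF tvs lc f] using xs by blast
  finally show ?thesis .
qed

definition Pset where "Pset = {u. rec f u \<le> ereal (xs u)}"

lemma part_c_le:
  assumes xB: "xs \<in> weakstar closure_of domconj f"
  shows "ereal (xs u) \<le> rec f u"
  using xB Bchar[OF tvs lc f] by blast

lemma L_sub_P: "L \<subseteq> Pset" unfolding L_def Pset_def by auto

lemma L_iff_P: "u \<in> L \<longleftrightarrow> u \<in> Pset \<and> - u \<in> Pset"
  unfolding Pset_def using memL by (simp add: xs_neg)

lemma h_rec_le0: "recc (qadd L) (qscale L) (cosets L) (hq f xs L) (proj L u) \<le> 0 \<longleftrightarrow> u \<in> Pset"
  unfolding h_rec Pset_def ereal_diff_le0_iff by simp

lemma c1: "{A\<in>cosets L. recc (qadd L) (qscale L) (cosets L) (hq f xs L) A \<le> 0} = {proj L 0}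
            \<longleftrightarrow> (\<forall>u\<in>Pset. - u \<in> Pset)"
proof
  assume eq: "{A\<in>cosets L. recc (qadd L) (qscale L) (cosets L) (hq f xs L) A \<le> 0} = {proj L 0}"
  show "\<forall>u\<in>Pset. - u \<in> Pset"
  proof
    fix u assume "u \<in> Pset"
    hence "proj L u \<in> {A\<in>cosets L. recc (qadd L) (qscale L) (cosets L) (hq f xs L) A \<le> 0}"
      using h_rec_le0 proj_cosets by blast
    hence "proj L u = proj L 0" using eq by blast
    hence "u \<in> L" using proj_eq by simp
    thus "- u \<in> Pset" using L_iff_P by blast
  qed
next
  assume sym: "\<forall>u\<in>Pset. - u \<in> Pset"
  show "{A\<in>cosets L. recc (qadd L) (qscale L) (cosets L) (hq f xs L) A \<le> 0} = {proj L 0}"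
  proof (intro set_eqI iffI)
    fix A assume A: "A \<in> {A\<in>cosets L. recc (qadd L) (qscale L) (cosets L) (hq f xs L) A \<le> 0}"
    then obtain u where u: "A = proj L u" using cosets_proj by blast
    hence "u \<in> Pset" using A h_rec_le0 by blast
    hence "u \<in> L" using sym L_iff_P by blast
    thus "A \<in> {proj L 0}" using u proj_eq by simp
  next
    fix A assume "A \<in> {proj L 0}"
    moreover have "(0::'a) \<in> Pset" using L_sub_P L_zero by blast
    ultimately show "A \<in> {A\<in>cosets L. recc (qadd L) (qscale L) (cosets L) (hq f xs L) A \<le> 0}"
      using h_rec_le0 proj_cosets by auto
  qed
qed

lemma c3: "(\<forall>u\<in>Pset. - u \<in> Pset) \<longleftrightarrow> L = Pset"
  using L_iff_P L_sub_P by blast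

lemma c4:
  assumes xB: "xs \<in> weakstar closure_of domconj f"
  shows "(L = Pset) \<longleftrightarrow> L = {u. rec f u = ereal (xs u)}"
proof -
  have "Pset = {u. rec f u = ereal (xs u)}" unfolding Pset_def using part_c_le[OF xB] by (auto intro: antisym)
  thus ?thesis by simp
qed

lemma cLf:
  assumes xB: "xs \<in> weakstar closure_of domconj f"
  shows "L = Lf f"
proof -
  define y where "y = (SOME y. y \<in> weakstar closure_of domconj f)"
  have yB: "y \<in> weakstar closure_of domconj f" unfolding y_def using xB by (rule someI[where P="\<lambda>y. y \<in> weakstar closure_of domconj f"])
  have yd: "y \<in> dual" using yB ws_closure_dual by blast
  have yl: "y (- u) = - y u" for u using linear_neg[OF dual_linear[OF yd]] .
  have yle: "ereal (y u) \<le> rec f u" for u using yB Bchar[OF tvs lc f] by blast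
  have xle: "ereal (xs u) \<le> rec f u" for u by (rule part_c_le[OF xB])
  have "u \<in> L \<longleftrightarrow> rec f u = ereal (y u) \<and> rec f (- u) = ereal (- y u)" for u
  proof
    assume "u \<in> L"
    hence a: "rec f u = ereal (xs u)" "rec f (- u) = ereal (- xs u)" unfolding L_def by auto
    have "y u \<le> xs u" using yle[of u] a by simp
    moreover have "- y u \<le> - xs u" using yle[of "-u"] a yl by simp
    ultimately have "y u = xs u" by simp
    thus "rec f u = ereal (y u) \<and> rec f (- u) = ereal (- y u)" using a by simp
  next
    assume a: "rec f u = ereal (y u) \<and> rec f (- u) = ereal (- y u)"
    have "xs u \<le> y u" using xle[of u] a by simp
    moreover have "- xs u \<le> - y u" using xle[of "-u"] a xs_neg by simp
    ultimately have "y u = xs u" by simp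
    thus "u \<in> L" unfolding L_def using a by simp
  qed
  thus ?thesis unfolding Lf_def y_def[symmetric] Let_def by auto
qed


lemma B_conv: "fconvex (weakstar closure_of domconj f)"
  unfolding fconvex_def Bchar[OF tvs lc f]
proof (intro ballI allI impI)
  fix y1 y2 and a b :: real
  assume y1: "y1 \<in> {y \<in> dual. \<forall>u. ereal (y u) \<le> rec f u}" and y2: "y2 \<in> {y \<in> dual. \<forall>u. ereal (y u) \<le> rec f u}"
    and ab: "0 \<le> a \<and> 0 \<le> b \<and> a + b = 1"
  have d: "(\<lambda>x. a * y1 x + b * y2 x) \<in> dual" using y1 y2 by (auto intro!: dual_add dual_scale)
  have "ereal (a * y1 u + b * y2 u) \<le> rec f u" for u
  proof (cases "rec f u")
    case (real r)
    have "ereal (y1 u) \<le> ereal r" "ereal (y2 u) \<le> ereal r" using y1 y2 real by (metis (mono_tags, lifting) mem_Collect_eq)+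
    hence "y1 u \<le> r" "y2 u \<le> r" by simp_all
    hence "a * y1 u + b * y2 u \<le> a * r + b * r" using ab by (intro add_mono mult_left_mono) auto
    also have "\<dots> = r" using ab by (simp add: distrib_right[symmetric])
    finally show ?thesis using real by simp
  qed (use rec_ninf[OF tvs f] in auto)
  thus "(\<lambda>x. a * y1 x + b * y2 x) \<in> {y \<in> dual. \<forall>u. ereal (y u) \<le> rec f u}" using d by blast
qed

lemma c2:
  assumes xB: "xs \<in> weakstar closure_of domconj f"
  shows "xs \<in> qri (weakstar closure_of domconj f) \<longleftrightarrow> (\<forall>u\<in>Pset. - u \<in> Pset)"
proof -
  define B where "B = weakstar closure_of domconj f"
  define D0 where "D0 = {(\<lambda>x. t * (c x - xs x)) | t c. t \<ge> 0 \<and> c \<in> B}"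
  define K where "K = weakstar closure_of D0"
  have qri_iff: "xs \<in> qri B \<longleftrightarrow> fsubspace K"
    unfolding qri_def K_def D0_def using xB B_def by simp
  have Bd: "c \<in> B \<Longrightarrow> c \<in> dual" for c unfolding B_def using ws_closure_dual by blast
  have Ble: "c \<in> B \<Longrightarrow> ereal (c u) \<le> rec f u" for c u unfolding B_def using Bchar[OF tvs lc f] by blast
  have xle: "ereal (xs u) \<le> rec f u" for u by (rule part_c_le[OF xB])
  have domB: "domconj f \<subseteq> B" unfolding B_def by (rule ws_subset_closure) (auto simp: domconj_def)
  have D0d: "D0 \<subseteq> dual"
  proof
    fix d assume "d \<in> D0"
    then obtain t c where d: "d = (\<lambda>x. t * (c x - xs x))" "c \<in> B" unfolding D0_def by blast
    have "(\<lambda>x. c x + (-1) * xs x) \<in> dual" using Bd[OF d(2)] xs by (intro dual_add dual_scale)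
    hence "(\<lambda>x. t * (c x + (-1) * xs x)) \<in> dual" by (rule dual_scale)
    thus "d \<in> dual" unfolding d by simp
  qed
  have D0K: "D0 \<subseteq> K" unfolding K_def by (rule ws_subset_closure[OF D0d])
  have D0le: "d u \<le> 0" if d: "d \<in> D0" and u: "u \<in> Pset" for d u
  proof -
    obtain t c where dd: "d = (\<lambda>x. t * (c x - xs x))" "c \<in> B" "t \<ge> 0" using d unfolding D0_def by blast
    have "rec f u \<le> ereal (xs u)" using u unfolding Pset_def by simp
    hence "ereal (c u) \<le> ereal (xs u)" using Ble[OF dd(2), of u] by (rule order_trans[rotated])
    hence "c u - xs u \<le> 0" by simp
    thus ?thesis unfolding dd using dd(3) by (simp add: mult_nonneg_nonpos)
  qed
  have P0: "0 \<in> Pset" using L_sub_P L_zero by blast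
  have Kle: "K \<subseteq> {y \<in> dual. \<forall>u\<in>Pset. y u \<le> 0}"
  proof -
    have eq: "{y \<in> dual. \<forall>u\<in>Pset. y u \<le> 0} = (\<Inter>u\<in>Pset. {y \<in> dual. y u \<le> 0})" using P0 by auto
    have "closedin weakstar {y \<in> dual. \<forall>u\<in>Pset. y u \<le> 0}"
      unfolding eq by (rule ws_closed_Inter) (use ws_closed_le P0 in auto)
    moreover have "D0 \<subseteq> {y \<in> dual. \<forall>u\<in>Pset. y u \<le> 0}" using D0d D0le by auto
    ultimately show ?thesis unfolding K_def by (intro ws_closure_sub)
  qed
  have "fsubspace K \<longleftrightarrow> (\<forall>u\<in>Pset. - u \<in> Pset)"
  proof
    assume fs: "fsubspace K"
    show "\<forall>u\<in>Pset. - u \<in> Pset"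
    proof (rule ballI, rule ccontr)
      fix u assume u: "u \<in> Pset" and nu: "- u \<notin> Pset"
      have "\<exists>c\<in>domconj f. c (- u) > xs (- u)"
      proof (rule ccontr)
        assume "\<not> (\<exists>c\<in>domconj f. c (- u) > xs (- u))"
        hence "rec f (- u) \<le> ereal (xs (- u))" using rec_le_sigma[OF tvs lc f, where u="-u" and c="xs (-u)"] by force
        thus False using nu unfolding Pset_def by simp
      qed
      then obtain c where c: "c \<in> domconj f" "c (- u) > xs (- u)" by blast
      have cB: "c \<in> B" using c(1) domB by blast
      have "(\<lambda>x. 1 * (c x - xs x)) \<in> D0" unfolding D0_def using cB by force
      hence zK: "(\<lambda>x. 1 * (c x - xs x)) \<in> K" using D0K by blast
      have sc: "\<And>c a. a \<in> K \<Longrightarrow> (\<lambda>x. c * a x) \<in> K" using fs unfolding fsubspace_def by blast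
      have "(\<lambda>x. (-1) * (1 * (c x - xs x))) \<in> K" using sc[OF zK, of "-1"] by simp
      hence "(-1) * (1 * (c u - xs u)) \<le> 0" using Kle u by blast
      hence "xs u \<le> c u" by simp
      moreover have "c (- u) = - c u" using linear_neg[OF dual_linear[OF Bd[OF cB]]] .
      ultimately show False using c(2) xs_neg by simp
    qed
  next
    assume sym: "\<forall>u\<in>Pset. - u \<in> Pset"
    define Z where "Z = {z \<in> dual. \<forall>u\<in>Pset. z u = 0}"
    have KZ: "K \<subseteq> Z"
    proof
      fix z assume z: "z \<in> K"
      hence zd: "z \<in> dual" and zle: "\<And>u. u \<in> Pset \<Longrightarrow> z u \<le> 0" using Kle by blast+
      have "z u = 0" if u: "u \<in> Pset" for u
      proof -
        have "z (- u) \<le> 0" using zle sym u by blast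
        moreover have "z (- u) = - z u" using linear_neg[OF dual_linear[OF zd]] .
        ultimately show ?thesis using zle[OF u] by simp
      qed
      thus "z \<in> Z" unfolding Z_def using zd by blast
    qed
    have D0ne: "D0 \<noteq> {}" unfolding D0_def using xB B_def by blast
    have D0cv: "fconvex D0"
      unfolding fconvex_def
    proof (intro ballI allI impI)
      fix d1 d2 and a b :: real
      assume d1: "d1 \<in> D0" and d2: "d2 \<in> D0" and ab: "0 \<le> a \<and> 0 \<le> b \<and> a + b = 1"
      obtain t1 c1 where 1: "d1 = (\<lambda>x. t1 * (c1 x - xs x))" "c1 \<in> B" "t1 \<ge> 0" using d1 unfolding D0_def by blast
      obtain t2 c2 where 2: "d2 = (\<lambda>x. t2 * (c2 x - xs x))" "c2 \<in> B" "t2 \<ge> 0" using d2 unfolding D0_def by blast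
      define T where "T = a * t1 + b * t2"
      have T0: "T \<ge> 0" unfolding T_def using ab 1(3) 2(3) by simp
      show "(\<lambda>x. a * d1 x + b * d2 x) \<in> D0"
      proof (cases "T = 0")
        case True
        hence "a * t1 = 0" "b * t2 = 0" using ab 1(3) 2(3) unfolding T_def
          by (smt (verit) mult_nonneg_nonneg)+
        hence "(\<lambda>x. a * d1 x + b * d2 x) = (\<lambda>x. 0 * (xs x - xs x))" unfolding 1(1) 2(1)
          by (auto simp: fun_eq_iff algebra_simps)
        thus ?thesis unfolding D0_def using xB B_def by blast
      next
        case False
        hence Tp: "T > 0" using T0 by simp
        define c where "c = (\<lambda>x. (a * t1 / T) * c1 x + (b * t2 / T) * c2 x)"
        have cv: "\<And>y1 y2 a' b'. y1 \<in> B \<Longrightarrow> y2 \<in> B \<Longrightarrow> 0 \<le> a' \<Longrightarrow> 0 \<le> b' \<Longrightarrow> a' + b' = 1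
                    \<Longrightarrow> (\<lambda>x. a' * y1 x + b' * y2 x) \<in> B"
          using B_conv unfolding fconvex_def B_def by blast
        have "a * t1 / T + b * t2 / T = 1" using Tp unfolding T_def by (simp add: add_divide_distrib[symmetric])
        hence "c \<in> B" unfolding c_def using ab 1(3) 2(3) Tp by (intro cv[OF 1(2) 2(2)]) auto
        moreover have "(\<lambda>x. a * d1 x + b * d2 x) = (\<lambda>x. T * (c x - xs x))"
        proof (rule ext)
          fix x
          have "T * (c x - xs x) = a * t1 * c1 x + b * t2 * c2 x - T * xs x"
            unfolding c_def using Tp by (simp add: field_simps)
          also have "\<dots> = a * (t1 * (c1 x - xs x)) + b * (t2 * (c2 x - xs x))"
            unfolding T_def by (simp add: algebra_simps)
          finally show "a * d1 x + b * d2 x = T * (c x - xs x)" unfolding 1(1) 2(1) by simp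
        qed
        ultimately show ?thesis unfolding D0_def using T0 by blast
      qed
    qed
    have ZK: "Z \<subseteq> K"
    proof
      fix z assume z: "z \<in> Z"
      show "z \<in> K"
      proof (rule ccontr)
        assume nz: "z \<notin> K"
        have zd: "z \<in> dual" using z unfolding Z_def by blast
        obtain u \<gamma> where g: "\<gamma> > 0" "\<And>d. d \<in> D0 \<Longrightarrow> d u \<le> z u - \<gamma>"
          using ws_sep[OF D0d D0cv D0ne zd] nz unfolding K_def by blast
        have "(\<lambda>x. 0 * (xs x - xs x)) \<in> D0" unfolding D0_def using xB B_def by blast
        hence zpos: "0 \<le> z u - \<gamma>" using g(2) by fastforce
        have "c u \<le> xs u" if c: "c \<in> domconj f" for c
        proof (rule ccontr)
          assume "\<not> c u \<le> xs u"
          hence pos: "c u - xs u > 0" by simp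
          define t where "t = (\<bar>z u - \<gamma>\<bar> + 1) / (c u - xs u)"
          have tp: "t \<ge> 0" unfolding t_def using pos by simp
          have "(\<lambda>x. t * (c x - xs x)) \<in> D0" unfolding D0_def using tp domB c by blast
          hence "t * (c u - xs u) \<le> z u - \<gamma>" using g(2) by fastforce
          moreover have "t * (c u - xs u) = \<bar>z u - \<gamma>\<bar> + 1" unfolding t_def using pos by simp
          ultimately show False by simp
        qed
        hence "rec f u \<le> ereal (xs u)" using rec_le_sigma[OF tvs lc f, where u=u and c="xs u"] by blast
        hence "u \<in> Pset" unfolding Pset_def by simp
        hence "z u = 0" using z unfolding Z_def by blast
        thus False using zpos g(1) by simp
      qed
    qed
    have "K = Z" using KZ ZK by blast
    moreover have "fsubspace Z"
      unfolding fsubspace_def Z_def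
    proof (intro conjI ballI allI)
      have "(\<lambda>x. 0 * xs x) \<in> dual" using xs by (rule dual_scale)
      thus "(\<lambda>_. 0) \<in> {z \<in> dual. \<forall>u\<in>Pset. z u = 0}" by simp
    next
      fix a b assume a: "a \<in> {z \<in> dual. \<forall>u\<in>Pset. z u = 0}" and b: "b \<in> {z \<in> dual. \<forall>u\<in>Pset. z u = 0}"
      show "(\<lambda>x. a x + b x) \<in> {z \<in> dual. \<forall>u\<in>Pset. z u = 0}" using a b by (auto intro: dual_add)
    next
      fix c :: real and a assume a: "a \<in> {z \<in> dual. \<forall>u\<in>Pset. z u = 0}"
      show "(\<lambda>x. c * a x) \<in> {z \<in> dual. \<forall>u\<in>Pset. z u = 0}" using a by (auto intro: dual_scale)
    qed
    ultimately show "fsubspace K" by simp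
  qed
  thus ?thesis using qri_iff unfolding B_def by simp
qed

end

theorem proposition14:
  fixes f :: "'a::{real_vector,t2_space} \<Rightarrow> ereal"
    and xs :: "'a \<Rightarrow> real"
    and L :: "'a set"
    and h :: "'a set \<Rightarrow> ereal"
  assumes tvs: "tvs TYPE('a)"
    and lc: "locally_convex TYPE('a)"
    and nontriv: "(UNIV :: 'a set) \<noteq> {0}"
    and f: "Gamma f"
    and xs: "xs \<in> dual"
    and L_def: "L = {u. rec f u = ereal (xs u) \<and> rec f (- u) = ereal (- xs u)}"
    and h_def: "h = hq f xs L"
  shows
    "subspace L \<and> closed L
   \<and> (\<forall>x. f x = h (proj L x) + ereal (xs x))
   \<and> (GammaF (qtop L) (qadd L) (qscale L) (cosets L) h
      \<and> (\<forall>u. recc (qadd L) (qscale L) (cosets L) h (proj L u) = rec f u - ereal (xs u))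
      \<and> {proj L u | u. recc (qadd L) (qscale L) (cosets L) h (proj L u) = 0
                    \<and> recc (qadd L) (qscale L) (cosets L) h (proj L (- u)) = 0} = {proj L 0})
   \<and> ((\<forall>A\<in>cosets L. recc (qadd L) (qscale L) (cosets L) h A \<ge> 0)
        \<longleftrightarrow> xs \<in> weakstar closure_of domconj f)
   \<and> (xs \<in> weakstar closure_of domconj f \<longrightarrow>
        L = Lf f
      \<and> ({A\<in>cosets L. recc (qadd L) (qscale L) (cosets L) h A \<le> 0} = {proj L 0}
           \<longleftrightarrow> xs \<in> qri (weakstar closure_of domconj f))
      \<and> (xs \<in> qri (weakstar closure_of domconj f) \<longleftrightarrow> L = {u. rec f u \<le> ereal (xs u)})
      \<and> (L = {u. rec f u \<le> ereal (xs u)} \<longleftrightarrow> L = {u. rec f u = ereal (xs u)}))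
   \<and> (Inf (h ` cosets L) = - conj f xs
      \<and> ((\<exists>m::real. \<forall>A\<in>cosets L. ereal m \<le> h A) \<longleftrightarrow> xs \<in> domconj f))
   \<and> ((\<exists>A\<in>cosets L. h A = Inf (h ` cosets L)) \<longleftrightarrow> xs \<in> Im_subdiff f)"
proof -
  interpret P: P14 f xs L using tvs lc f xs L_def by unfold_locales
  have c: "xs \<in> weakstar closure_of domconj f \<longrightarrow>
        L = Lf f
      \<and> ({A\<in>cosets L. recc (qadd L) (qscale L) (cosets L) h A \<le> 0} = {proj L 0}
           \<longleftrightarrow> xs \<in> qri (weakstar closure_of domconj f))
      \<and> (xs \<in> qri (weakstar closure_of domconj f) \<longleftrightarrow> L = {u. rec f u \<le> ereal (xs u)})
      \<and> (L = {u. rec f u \<le> ereal (xs u)} \<longleftrightarrow> L = {u. rec f u = ereal (xs u)})"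
  proof
    assume xB: "xs \<in> weakstar closure_of domconj f"
    show "L = Lf f
      \<and> ({A\<in>cosets L. recc (qadd L) (qscale L) (cosets L) h A \<le> 0} = {proj L 0}
           \<longleftrightarrow> xs \<in> qri (weakstar closure_of domconj f))
      \<and> (xs \<in> qri (weakstar closure_of domconj f) \<longleftrightarrow> L = {u. rec f u \<le> ereal (xs u)})
      \<and> (L = {u. rec f u \<le> ereal (xs u)} \<longleftrightarrow> L = {u. rec f u = ereal (xs u)})"
      using P.cLf[OF xB] P.c1 P.c2[OF xB] P.c3 P.c4[OF xB] unfolding h_def P.Pset_def by blast
  qed
  show ?thesis
    unfolding h_def
    using P.L_sub P.L_closed P.f_decomp P.h_Gamma P.h_rec P.h_rec0_set P.part_b c[unfolded h_def]
      P.h_Inf P.h_bdd P.h_attain by blast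
qed

end
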